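(* In the setting described in the context, for every $\varepsilon>0$ and every $\delta\in(0,\eta]$, $$\|\nabla\varphi_0\|_{L^2(D_\delta)}^2\le \varepsilon\,\|\nabla u^0_\delta\|_{L^1(\Omega)},$$ where $\varphi_0\in\mathcal{V}^\delta$ is the solution of the weighted Dirichlet problem defined in the context.
   Context: Let $\Omega\subset\mathbb{R}^d$ be a bounded connected Lipschitz domain; $\langle\cdot,\cdot\rangle$ and $\|\cdot\|$ denote the $L^2(\Omega)$ inner product and norm, $|\cdot|$ the Euclidean norm, $\mathcal{H}^{d-1}$ the $(d-1)$-dimensional Hausdorff measure. Weight: for each $\varepsilon>0$, $\hat\mu_\varepsilon:[0,\infty)\to\mathbb{R}$ is non-increasing with $\hat\mu_\varepsilon(0)=\varepsilon^{-1}$, $\hat\mu_\varepsilon(t)>0$ and $t\hat\mu_\varepsilon(t)\le1$ for all $t\ge0$; for $w$ with $\nabla w\in L^\infty(\Omega)$ put $\mu_\varepsilon[w](x)=\hat\mu_\varepsilon(|\nabla w(x)|)$. Medium: $u=u^0+\widetilde u$ with $u^0=\sum_{m=1}^M\hat u^{0,m}\chi^{0,m}$, where $\hat u^{0,m}\in\mathbb{R}$ and $\chi^{0,m}$ is the characteristic function of $A^{0,m}$, the $A^{0,m}$ being mutually disjoint connected open sets with $\overline\Omega\subset\overline{\bigcup_m A^{0,m}}$ and $\mathcal{H}^{d-1}(\partial A^{0,m}\cap\partial\Omega)>0$; and $\widetilde u=\sum_{k=1}^K\hat u^k\chi^k$ with $\hat u^k\neq0$, $\chi^k$ the characteristic function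 of a connected open set $A^k$ compactly contained in $\Omega\setminus S$, where $S=(\bigcup_m\partial A^{0,m})\setminus\partial\Omega$; the boundaries $\partial A^1,\dots,\partial A^K$ are mutually disjoint. For $\delta>0$: $S_\delta=\{x\in\Omega:\operatorname{dist}(x,S)<\delta\}$, $U^k_\delta=\{x\in\Omega:\operatorname{dist}(x,\partial A^k)<\delta\}$, $U_\delta=\bigcup_{k=1}^K U^k_\delta$, $D_\delta=\Omega\setminus\overline{U_\delta\cup S_\delta}$, $A^k_\delta=(\Omega\setminus\overline{U^k_\delta})\cap A^k$, $A_\delta=\bigcup_k A^k_\delta$. Approximation: $\mathcal{V}^\delta\subset H^1(\Omega)$ is a closed subspace, $\mathcal{V}^\delta_0=\mathcal{V}^\delta\cap H^1_0(\Omega)$; $\chi^{0,m}_\delta\in\mathcal{V}^\delta$ and $\chi^k_\delta\in\mathcal{V}^\delta_0$ converge in $L^2(\Omega)$ to $\chi^{0,m}$, $\chi^k$ as $\delta\to0$; $u^0_\delta=\sum_m\hat u^{0,m}\chi^{0,m}_\delta$, $\widetilde u_\delta=\sum_k\hat u^k\chi^k_\delta$, $u_\delta=u^0_\delta+\widetilde u_\delta$. Standing assumptions: $\eta>0$ is such that $A^k_\eta\neq\emptyset$ for all $k$, $\overline{S_\eta}\cap\overline{U_\eta}=\emptyset$, $\overline{U^k_\eta}\cap\overline{U^j_\eta}=\emptyset$ for $k\ne j$, and every connected component $E$ of $D_\eta\setminus A_\eta$ satisfies $\mathcal{H}^{d-1}(\partial E\cap\partial\Omega)>0$. For all $\delta\in(0,\eta]$: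 $\nabla\chi^{0,m}_\delta\in L^\infty(\Omega)$ with $\operatorname{supp}\nabla\chi^{0,m}_\delta\subset\overline{S_\delta}$, and $\nabla\chi^k_\delta\in L^\infty(\Omega)$ with $\operatorname{supp}\nabla\chi^k_\delta\subset\overline{U^k_\delta}$. Problem: $B[v,w]=\langle\mu_\varepsilon[u_\delta]\nabla v,\nabla w\rangle$; $\varphi_0\in\mathcal{V}^\delta$ satisfies $B[\varphi_0,v]=0$ for all $v\in\mathcal{V}^\delta_0$ and $\varphi_0=u_\delta$ on $\partial\Omega$ (i.e. $\varphi_0-u_\delta\in\mathcal{V}^\delta_0$). *)

theory Defs
  imports "HOL-Analysis.Analysis"
begin

fun Ck_fun :: "nat \<Rightarrow> ('a::euclidean_space \<Rightarrow> real) \<Rightarrow> bool" where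
  "Ck_fun 0 f = continuous_on UNIV f"
| "Ck_fun (Suc n) f = ((\<forall>x. f differentiable (at x)) \<and>
      (\<forall>i\<in>Basis. Ck_fun n (\<lambda>x. frechet_derivative f (at x) i)))"

definition smooth_fun :: "('a::euclidean_space \<Rightarrow> real) \<Rightarrow> bool" where
  "smooth_fun f \<longleftrightarrow> (\<forall>n. Ck_fun n f)"

definition grad :: "('a::euclidean_space \<Rightarrow> real) \<Rightarrow> 'a \<Rightarrow> 'a" where
  "grad f x = (\<Sum>i\<in>Basis. frechet_derivative f (at x) i *\<^sub>R i)"

definition test_function :: "'a::euclidean_space set \<Rightarrow> ('a \<Rightarrow> real) \<Rightarrow> bool" where
  "test_function \<Omega> \<phi> \<longleftrightarrow> smooth_fun \<phi> \<and>
     compact (closure {x. \<phi> x \<noteq> 0}) \<and> closure {x. \<phi> x \<noteq> 0} \<subseteq> \<Omega>"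

definition weak_grad :: "'a::euclidean_space set \<Rightarrow> ('a \<Rightarrow> real) \<Rightarrow> ('a \<Rightarrow> 'a) \<Rightarrow> bool" where
  "weak_grad \<Omega> v g \<longleftrightarrow>
     (\<forall>K. compact K \<and> K \<subseteq> \<Omega> \<longrightarrow> set_integrable lebesgue K v \<and> set_integrable lebesgue K g) \<and>
     (\<forall>\<phi>. test_function \<Omega> \<phi> \<longrightarrow> (\<forall>i\<in>Basis.
        (LINT x:\<Omega>|lebesgue. v x * (grad \<phi> x \<bullet> i)) = - (LINT x:\<Omega>|lebesgue. (g x \<bullet> i) * \<phi> x)))"

definition L2_fun :: "'a::euclidean_space set \<Rightarrow> ('a \<Rightarrow> real) \<Rightarrow> bool" where
  "L2_fun \<Omega> f \<longleftrightarrow> set_borel_measurable lebesgue \<Omega> f \<and> set_integrable lebesgue \<Omega> (\<lambda>x. (f x)\<^sup>2)"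

definition L2_vec :: "'a::euclidean_space set \<Rightarrow> ('a \<Rightarrow> 'a) \<Rightarrow> bool" where
  "L2_vec \<Omega> g \<longleftrightarrow> set_borel_measurable lebesgue \<Omega> g \<and> set_integrable lebesgue \<Omega> (\<lambda>x. (norm (g x))\<^sup>2)"

definition H1 :: "'a::euclidean_space set \<Rightarrow> ('a \<Rightarrow> real) set" where
  "H1 \<Omega> = {v. L2_fun \<Omega> v \<and> (\<exists>g. weak_grad \<Omega> v g \<and> L2_vec \<Omega> g)}"

definition H1_converges ::
  "'a::euclidean_space set \<Rightarrow> (nat \<Rightarrow> 'a \<Rightarrow> real) \<Rightarrow> (nat \<Rightarrow> 'a \<Rightarrow> 'a) \<Rightarrow> ('a \<Rightarrow> real) \<Rightarrow> ('a \<Rightarrow> 'a) \<Rightarrow> bool" where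
  "H1_converges \<Omega> f gf v gv \<longleftrightarrow>
     (\<forall>n. weak_grad \<Omega> (f n) (gf n)) \<and> weak_grad \<Omega> v gv \<and>
     (\<lambda>n. LINT x:\<Omega>|lebesgue. (f n x - v x)\<^sup>2) \<longlonglongrightarrow> 0 \<and>
     (\<lambda>n. LINT x:\<Omega>|lebesgue. (norm (gf n x - gv x))\<^sup>2) \<longlonglongrightarrow> 0"

definition H1_0 :: "'a::euclidean_space set \<Rightarrow> ('a \<Rightarrow> real) set" where
  "H1_0 \<Omega> = {v \<in> H1 \<Omega>. \<exists>\<phi> gv. (\<forall>n. test_function \<Omega> (\<phi> n)) \<and>
       H1_converges \<Omega> \<phi> (\<lambda>n. grad (\<phi> n)) v gv}"

definition closed_H1_subspace :: "'a::euclidean_space set \<Rightarrow> ('a \<Rightarrow> real) set \<Rightarrow> bool" where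
  "closed_H1_subspace \<Omega> V \<longleftrightarrow> V \<subseteq> H1 \<Omega> \<and> (\<lambda>x. 0) \<in> V \<and>
     (\<forall>v\<in>V. \<forall>w\<in>V. (\<lambda>x. v x + w x) \<in> V) \<and> (\<forall>c. \<forall>v\<in>V. (\<lambda>x. c * v x) \<in> V) \<and>
     (\<forall>f gf v gv. (\<forall>n. f n \<in> V) \<and> v \<in> H1 \<Omega> \<and> H1_converges \<Omega> f gf v gv \<longrightarrow> v \<in> V)"

text \<open>Hausdorff measure H^s (without the normalising constant, which is irrelevant
  for the positivity statements used here).\<close>
definition hausdorff_pre :: "nat \<Rightarrow> real \<Rightarrow> 'a::metric_space set \<Rightarrow> ennreal" where
  "hausdorff_pre s r E = (INF C \<in> {C :: nat \<Rightarrow> 'a set. E \<subseteq> (\<Union>n. C n) \<and> (\<forall>n. bounded (C n) \<and> diameter (C n) \<le> r)}.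
       (\<Sum>n. ennreal (if C n = {} then 0 else diameter (C n) ^ s)))"

definition hausdorff_measure :: "nat \<Rightarrow> 'a::metric_space set \<Rightarrow> ennreal" where
  "hausdorff_measure s E = (SUP r \<in> {0<..}. hausdorff_pre s r E)"

text \<open>Lipschitz domain: open, and near every boundary point, after choosing a unit
  "vertical" direction e, the domain is the subgraph of a Lipschitz function of the
  coordinates orthogonal to e.\<close>
definition lipschitz_domain :: "'a::euclidean_space set \<Rightarrow> bool" where
  "lipschitz_domain \<Omega> \<longleftrightarrow> open \<Omega> \<and> (\<forall>p\<in>frontier \<Omega>. \<exists>r>0. \<exists>e L f. norm e = 1 \<and>
      L-lipschitz_on UNIV (f :: 'a \<Rightarrow> real) \<and>
      \<Omega> \<inter> ball p r = {x \<in> ball p r. x \<bullet> e < f (x - (x \<bullet> e) *\<^sub>R e)})"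

text \<open>{x in Omega. dist(x,T) < delta}, written so that it is empty when T is empty.\<close>
definition nbhd :: "'a::metric_space set \<Rightarrow> 'a set \<Rightarrow> real \<Rightarrow> 'a set" where
  "nbhd \<Omega> T \<delta> = {x \<in> \<Omega>. \<exists>y\<in>T. dist x y < \<delta>}"

end

theory Submission
  imports Defs "HOL-Computational_Algebra.Polynomial"
begin


definition gE :: "real poly \<Rightarrow> real \<Rightarrow> real" where
  "gE P s = (if s > 0 then poly P (1/s) * exp (-1/s) else 0)"

definition tP :: "real poly \<Rightarrow> real poly" where
  "tP P = [:0,0,1:] * (P - pderiv P)"

lemma poly_div_exp_0: "((\<lambda>y. poly Q y / exp y) \<longlongrightarrow> (0::real)) at_top"
proof -
  have "((\<lambda>y. \<Sum>i\<le>degree Q. coeff Q i * (y ^ i / exp y)) \<longlongrightarrow> (\<Sum>i\<le>degree Q. coeff Q i * 0)) at_top"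
    by (intro tendsto_sum tendsto_mult tendsto_const tendsto_power_div_exp_0)
  moreover have "(\<lambda>y. \<Sum>i\<le>degree Q. coeff Q i * (y ^ i / exp y)) = (\<lambda>y. poly Q y / exp y)"
    by (auto simp: poly_altdef sum_divide_distrib)
  ultimately show ?thesis by simp
qed

lemma gE_deriv0: "(gE P has_real_derivative 0) (at 0)"
proof -
  have r: "((\<lambda>h. gE P h / h) \<longlongrightarrow> 0) (at_right 0)"
  proof -
    have "((\<lambda>y. poly ([:0,1:] * P) y / exp y) \<longlongrightarrow> (0::real)) at_top" by (rule poly_div_exp_0)
    then have "((\<lambda>y. gE P (inverse y) / inverse y) \<longlongrightarrow> (0::real)) at_top"
    proof (rule tendsto_cong[THEN iffD1, rotated])
      show "\<forall>\<^sub>F x in at_top. poly ([:0, 1:] * P) x / exp x = gE P (inverse x) / inverse x"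
        using eventually_gt_at_top[of 0]
        by eventually_elim (auto simp: gE_def exp_minus field_simps)
    qed
    then show ?thesis by (simp add: filterlim_at_right_to_top)
  qed
  have l: "((\<lambda>h. gE P h / h) \<longlongrightarrow> 0) (at_left 0)"
  proof -
    have "\<forall>\<^sub>F h in at_left (0::real). gE P h / h = 0"
      by (auto simp: eventually_at_left_field gE_def intro!: exI[of _ "-1"])
    then show ?thesis by (rule tendsto_eventually)
  qed
  have "((\<lambda>h. gE P h / h) \<longlongrightarrow> 0) (at 0)"
    using r l by (simp add: filterlim_at_split)
  then show ?thesis by (simp add: DERIV_def gE_def)
qed

lemma gE_deriv: "(gE P has_real_derivative gE (tP P) s) (at s)"
proof (cases "s > 0")
  case True
  have d: "((\<lambda>s. poly P (1/s) * exp (-1/s)) has_real_derivative gE (tP P) s) (at s)"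
    using True
    by (auto intro!: derivative_eq_intros DERIV_chain2[OF poly_DERIV]
          simp: gE_def tP_def power2_eq_square field_simps)
  show ?thesis
    apply (rule has_field_derivative_transform_within_open[OF d, of "{0<..}"])
    using True by (auto simp: gE_def)
next
  case False
  show ?thesis
  proof (cases "s = 0")
    case True then show ?thesis using gE_deriv0[of P] by (simp add: gE_def)
  next
    case False
    with \<open>\<not> s > 0\<close> have "s < 0" by simp
    have d: "((\<lambda>s. 0) has_real_derivative gE (tP P) s) (at s)"
      using \<open>s < 0\<close> by (simp add: gE_def)
    show ?thesis
      apply (rule has_field_derivative_transform_within_open[OF d, of "{..<0}"])
      using \<open>s < 0\<close> by (auto simp: gE_def)
  qed
qed



inductive_set smcls :: "real poly \<Rightarrow> (real \<Rightarrow> real) set" for q where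
  base: "(\<lambda>t. gE P (poly q t) * poly R t) \<in> smcls q"
| add: "f \<in> smcls q \<Longrightarrow> g \<in> smcls q \<Longrightarrow> (\<lambda>t. f t + g t) \<in> smcls q"

lemma smcls_deriv: "f \<in> smcls q \<Longrightarrow> \<exists>f'\<in>smcls q. \<forall>t. (f has_real_derivative f' t) (at t)"
proof (induction rule: smcls.induct)
  case (base P R)
  let ?f' = "\<lambda>t. (\<lambda>t. gE (tP P) (poly q t) * poly (pderiv q * R) t) t + (\<lambda>t. gE P (poly q t) * poly (pderiv R) t) t"
  have "?f' \<in> smcls q" by (intro smcls.intros)
  moreover have "((\<lambda>t. gE P (poly q t) * poly R t) has_real_derivative ?f' t) (at t)" for t
    by (auto intro!: derivative_eq_intros DERIV_chain2[OF gE_deriv] simp: algebra_simps)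
  ultimately show ?case by (intro bexI[of _ ?f']) simp_all
next
  case (add f g)
  then obtain f' g' where "f' \<in> smcls q" "g' \<in> smcls q"
    "\<And>t. (f has_real_derivative f' t) (at t)" "\<And>t. (g has_real_derivative g' t) (at t)" by blast
  then show ?case by (intro bexI[of _ "\<lambda>t. f' t + g' t"]) (auto intro!: derivative_eq_intros smcls.intros)
qed

definition prodf :: "('a::euclidean_space \<Rightarrow> real \<Rightarrow> real) \<Rightarrow> 'a \<Rightarrow> real" where
  "prodf F x = (\<Prod>i\<in>Basis. F i (x \<bullet> i))"

lemma prodf_deriv:
  fixes F :: "'a::euclidean_space \<Rightarrow> real \<Rightarrow> real"
  assumes "\<And>i t. i \<in> Basis \<Longrightarrow> (F i has_real_derivative D i t) (at t)"
  shows "(prodf F has_derivative (\<lambda>y. \<Sum>i\<in>Basis. (y \<bullet> i * D i (x \<bullet> i)) * (\<Prod>j\<in>Basis - {i}. F j (x \<bullet> j)))) (at x)"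
proof -
  have "((\<lambda>x. F i (x \<bullet> i)) has_derivative (\<lambda>y. y \<bullet> i * D i (x \<bullet> i))) (at x)" if "i \<in> Basis" for i
  proof -
    have "((F i) \<circ> (\<lambda>x. x \<bullet> i) has_derivative (\<lambda>h. h * D i (x \<bullet> i)) \<circ> (\<lambda>y. y \<bullet> i)) (at x)"
      apply (rule diff_chain_at)
       apply (rule bounded_linear_imp_has_derivative[OF bounded_linear_inner_left])
      using assms[OF that, of "x \<bullet> i"]
      by (simp add: has_field_derivative_def mult_commute_abs)
    then show ?thesis by (simp add: o_def)
  qed
  then show ?thesis unfolding prodf_def by (intro has_derivative_prod) auto
qed

lemma prodf_frechet:
  fixes F :: "'a::euclidean_space \<Rightarrow> real \<Rightarrow> real"
  assumes "\<And>i t. i \<in> Basis \<Longrightarrow> (F i has_real_derivative D i t) (at t)" "j \<in> Basis"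
  shows "frechet_derivative (prodf F) (at x) j = prodf (F(j := D j)) x"
proof -
  have fd: "frechet_derivative (prodf F) (at x) = (\<lambda>y. \<Sum>i\<in>Basis. (y \<bullet> i * D i (x \<bullet> i)) * (\<Prod>k\<in>Basis - {i}. F k (x \<bullet> k)))"
    by (rule frechet_derivative_at[OF prodf_deriv[OF assms(1)], symmetric])
  have "frechet_derivative (prodf F) (at x) j = (\<Sum>i\<in>Basis. (j \<bullet> i * D i (x \<bullet> i)) * (\<Prod>k\<in>Basis - {i}. F k (x \<bullet> k)))"
    unfolding fd ..
  also have "\<dots> = (\<Sum>i\<in>Basis. if i = j then D j (x \<bullet> j) * (\<Prod>k\<in>Basis - {j}. F k (x \<bullet> k)) else 0)"
  proof (rule sum.cong[OF refl])
    fix i :: 'a assume "i \<in> Basis"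
    then show "(j \<bullet> i * D i (x \<bullet> i)) * (\<Prod>k\<in>Basis - {i}. F k (x \<bullet> k)) =
        (if i = j then D j (x \<bullet> j) * (\<Prod>k\<in>Basis - {j}. F k (x \<bullet> k)) else 0)"
      using assms(2) inner_Basis[of j i] by auto
  qed
  also have "\<dots> = D j (x \<bullet> j) * (\<Prod>k\<in>Basis - {j}. F k (x \<bullet> k))"
    using assms(2) by (simp add: sum.delta')
  also have "(\<Prod>k\<in>Basis - {j}. F k (x \<bullet> k)) = (\<Prod>k\<in>Basis - {j}. (F(j := D j)) k (x \<bullet> k))"
    by (rule prod.cong) auto
  also have "D j (x \<bullet> j) * \<dots> = prodf (F(j := D j)) x"
    unfolding prodf_def using assms(2) by (subst prod.remove[of Basis j]) auto
  finally show ?thesis .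
qed

lemma smcls_choice:
  assumes "\<forall>i\<in>Basis. F i \<in> smcls (Q i)"
  obtains D where "\<forall>i\<in>Basis. D i \<in> smcls (Q i) \<and> (\<forall>t. (F i has_real_derivative D i t) (at t))"
proof -
  have "\<forall>i\<in>Basis. \<exists>f'. f' \<in> smcls (Q i) \<and> (\<forall>t. (F i has_real_derivative f' t) (at t))"
    using assms smcls_deriv by blast
  from bchoice[OF this] show ?thesis using that by blast
qed

lemma Ck_prodf:
  fixes F :: "'a::euclidean_space \<Rightarrow> real \<Rightarrow> real"
  shows "(\<forall>i\<in>Basis. F i \<in> smcls (Q i)) \<Longrightarrow> Ck_fun n (prodf F)"
proof (induction n arbitrary: F)
  case 0
  obtain D where D: "\<forall>i\<in>Basis. D i \<in> smcls (Q i) \<and> (\<forall>t. (F i has_real_derivative D i t) (at t))"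
    using smcls_choice[OF 0] by blast
  have dd: "\<And>i t. i \<in> Basis \<Longrightarrow> (F i has_real_derivative D i t) (at t)" using D by blast
  have "prodf F differentiable (at x)" for x
    using prodf_deriv[of F D, OF dd] unfolding differentiable_def by blast
  then show ?case
    by (auto intro!: continuous_at_imp_continuous_on differentiable_imp_continuous_within)
next
  case (Suc n)
  obtain D where D: "\<forall>i\<in>Basis. D i \<in> smcls (Q i) \<and> (\<forall>t. (F i has_real_derivative D i t) (at t))"
    using smcls_choice[OF Suc.prems] by blast
  have dd: "\<And>i t. i \<in> Basis \<Longrightarrow> (F i has_real_derivative D i t) (at t)" using D by blast
  have diff: "prodf F differentiable (at x)" for x
    using prodf_deriv[of F D, OF dd] unfolding differentiable_def by blast
  have "Ck_fun n (\<lambda>x. frechet_derivative (prodf F) (at x) j)" if j: "j \<in> Basis" for j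
  proof -
    have "(\<lambda>x. frechet_derivative (prodf F) (at x) j) = prodf (F(j := D j))"
      using prodf_frechet[of F D, OF dd j] by (intro ext) simp
    moreover have "\<forall>i\<in>Basis. (F(j := D j)) i \<in> smcls (Q i)"
      using Suc.prems D j by auto
    ultimately show ?thesis using Suc.IH by simp
  qed
  then show ?case using diff by simp
qed


definition bq :: "'a::euclidean_space \<Rightarrow> 'a \<Rightarrow> nat \<Rightarrow> 'a \<Rightarrow> real poly" where
  "bq a b n i = smult (real n + 1) ([:-(a \<bullet> i), 1:] * [:b \<bullet> i, -1:])"

definition bF :: "'a::euclidean_space \<Rightarrow> 'a \<Rightarrow> nat \<Rightarrow> 'a \<Rightarrow> real \<Rightarrow> real" where
  "bF a b n i = (\<lambda>t. gE 1 (poly (bq a b n i) t) * poly 1 t)"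

definition psi :: "'a::euclidean_space \<Rightarrow> 'a \<Rightarrow> nat \<Rightarrow> 'a \<Rightarrow> real" where
  "psi a b n = prodf (bF a b n)"

lemma poly_bq: "poly (bq a b n i) t = (real n + 1) * ((t - a \<bullet> i) * (b \<bullet> i - t))"
  by (simp add: bq_def algebra_simps)

lemma bF_eq: "bF a b n i t = (if (t - a \<bullet> i) * (b \<bullet> i - t) > 0
     then exp (- 1 / ((real n + 1) * ((t - a \<bullet> i) * (b \<bullet> i - t)))) else 0)"
proof -
  have "(real n + 1) * c > 0 \<longleftrightarrow> c > 0" for c :: real
    by (simp add: zero_less_mult_iff add_pos_nonneg)
  then show ?thesis by (simp add: bF_def gE_def poly_bq)
qed

lemma bF_range: "0 \<le> bF a b n i t \<and> bF a b n i t \<le> 1"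
  by (simp add: bF_eq)

lemma smooth_psi: "smooth_fun (psi a b n)"
  unfolding smooth_fun_def psi_def
proof
  fix k
  show "Ck_fun k (prodf (bF a b n))"
  proof (rule Ck_prodf[where Q = "bq a b n"])
    show "\<forall>i\<in>Basis. bF a b n i \<in> smcls (bq a b n i)"
      unfolding bF_def by (blast intro: smcls.base)
  qed
qed

lemma continuous_psi: "continuous_on UNIV (psi a b n)"
  using smooth_psi[of a b n] unfolding smooth_fun_def by (metis Ck_fun.simps(1))

lemma psi_range: "0 \<le> psi a b n x \<and> psi a b n x \<le> 1"
  unfolding psi_def prodf_def
  by (auto intro!: prod_nonneg prod_le_1 simp: bF_range)

lemma psi_nz:
  assumes "\<forall>i\<in>Basis. a \<bullet> i < b \<bullet> i" "psi a b n x \<noteq> 0"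
  shows "x \<in> box a b"
proof -
  have "bF a b n i (x \<bullet> i) \<noteq> 0" if "i \<in> Basis" for i
    using assms(2) that unfolding psi_def prodf_def by auto
  then have "(x \<bullet> i - a \<bullet> i) * (b \<bullet> i - x \<bullet> i) > 0" if "i \<in> Basis" for i
    using that by (metis bF_eq)
  then have "a \<bullet> i < x \<bullet> i \<and> x \<bullet> i < b \<bullet> i" if "i \<in> Basis" for i
    using that assms(1) by (fastforce simp: zero_less_mult_iff)
  then show ?thesis by (simp add: mem_box)
qed

lemma psi_test:
  assumes "\<forall>i\<in>Basis. a \<bullet> i < b \<bullet> i" "cbox a b \<subseteq> \<Omega>"
  shows "test_function \<Omega> (psi a b n)"
proof -
  have sub: "{x. psi a b n x \<noteq> 0} \<subseteq> cbox a b"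
    using psi_nz[OF assms(1)] box_subset_cbox by blast
  then have cl: "closure {x. psi a b n x \<noteq> 0} \<subseteq> cbox a b"
    by (rule closure_minimal[OF _ closed_cbox])
  moreover have "compact (closure {x. psi a b n x \<noteq> 0})"
  proof -
    have "bounded {x. psi a b n x \<noteq> 0}" using sub bounded_cbox bounded_subset by blast
    then show ?thesis by (simp add: compact_closure)
  qed
  ultimately show ?thesis using assms(2) smooth_psi unfolding test_function_def by blast
qed

lemma psi_lim:
  assumes "\<forall>i\<in>Basis. a \<bullet> i < b \<bullet> i"
  shows "(\<lambda>n. psi a b n x) \<longlonglongrightarrow> indicator (box a b) x"
proof (cases "x \<in> box a b")
  case True
  have "(\<lambda>n. bF a b n i (x \<bullet> i)) \<longlonglongrightarrow> 1" if i: "i \<in> Basis" for i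
  proof -
    define c where "c = (x \<bullet> i - a \<bullet> i) * (b \<bullet> i - x \<bullet> i)"
    have c: "c > 0" using True i by (auto simp: mem_box c_def)
    have "(\<lambda>n. - 1 / ((real n + 1) * c)) \<longlonglongrightarrow> - 0"
    proof -
      have "(\<lambda>n. inverse (real n + 1) * inverse c) \<longlonglongrightarrow> 0 * inverse c"
        using LIMSEQ_inverse_real_of_nat by (intro tendsto_mult tendsto_const) (simp add: add.commute)
      then have "(\<lambda>n. - (inverse (real n + 1) * inverse c)) \<longlonglongrightarrow> - 0" by (intro tendsto_minus) simp
      moreover have "(\<lambda>n. - (inverse (real n + 1) * inverse c)) = (\<lambda>n. - 1 / ((real n + 1) * c))"
        using c by (intro ext) (simp add: field_simps)
      ultimately show ?thesis by simp
    qed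
    then have "(\<lambda>n. exp (- 1 / ((real n + 1) * c))) \<longlonglongrightarrow> exp (- 0)"
      by (rule tendsto_exp)
    then show ?thesis using c by (simp add: bF_eq c_def[symmetric])
  qed
  then have "(\<lambda>n. \<Prod>i\<in>Basis. bF a b n i (x \<bullet> i)) \<longlonglongrightarrow> (\<Prod>i\<in>(Basis::'a set). 1)"
    by (intro tendsto_prod) auto
  then show ?thesis using True by (simp add: psi_def prodf_def)
next
  case False
  have "psi a b n x = 0" for n using psi_nz[OF assms] False by blast
  then show ?thesis using False by simp
qed


lemma psi_meas: "psi a b n \<in> borel_measurable lebesgue"
proof -
  have "psi a b n \<in> borel_measurable (lebesgue_on UNIV)"
    by (rule continuous_imp_measurable_on_sets_lebesgue[OF continuous_psi]) simp
  then show ?thesis by (simp add: lebesgue_on_UNIV_eq)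
qed

lemma FL_box:
  fixes h :: "'a::euclidean_space \<Rightarrow> real"
  assumes loc: "\<And>K. compact K \<Longrightarrow> K \<subseteq> \<Omega> \<Longrightarrow> set_integrable lebesgue K h"
    and zero: "\<And>\<psi>. test_function \<Omega> \<psi> \<Longrightarrow> (LINT x:\<Omega>|lebesgue. h x * \<psi> x) = 0"
    and sub: "cbox a b \<subseteq> \<Omega>"
  shows "(LINT x:box a b|lebesgue. h x) = 0"
proof (cases "box a b = {}")
  case True then show ?thesis by (simp add: set_lebesgue_integral_def)
next
  case False
  then have ab: "\<forall>i\<in>Basis. a \<bullet> i < b \<bullet> i" by (simp add: box_ne_empty)
  have int: "integrable lebesgue (\<lambda>x. indicator (cbox a b) x * h x)"
    using loc[of "cbox a b"] sub unfolding set_integrable_def by auto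
  have eq: "(LINT x:\<Omega>|lebesgue. h x * psi a b n x) = (LINT x|lebesgue. indicator (cbox a b) x * h x * psi a b n x)" for n
    unfolding set_lebesgue_integral_def
  proof (rule Bochner_Integration.integral_cong[OF refl])
    fix x
    show "indicator \<Omega> x *\<^sub>R (h x * psi a b n x) = indicator (cbox a b) x * h x * psi a b n x"
      using psi_nz[OF ab, of n x] box_subset_cbox[of a b] sub by (auto simp: indicator_def)
  qed
  have lim: "(\<lambda>n. LINT x|lebesgue. indicator (cbox a b) x * h x * psi a b n x) \<longlonglongrightarrow>
      (LINT x|lebesgue. indicator (cbox a b) x * h x * indicator (box a b) x)"
  proof (rule integral_dominated_convergence[where w = "\<lambda>x. \<bar>indicator (cbox a b) x * h x\<bar>"])
    have mh: "(\<lambda>x. indicator (cbox a b) x * h x) \<in> borel_measurable lebesgue"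
      using int by (rule borel_measurable_integrable)
    have mb: "(indicat_real (box a b)) \<in> borel_measurable lebesgue"
      using lmeasurable_box fmeasurableD borel_measurable_indicator by blast
    show "(\<lambda>x. indicator (cbox a b) x * h x * indicator (box a b) x) \<in> borel_measurable lebesgue"
      by (rule borel_measurable_times[OF mh mb])
    show "(\<lambda>x. indicator (cbox a b) x * h x * psi a b n x) \<in> borel_measurable lebesgue" for n
      by (rule borel_measurable_times[OF mh psi_meas])
    show "integrable lebesgue (\<lambda>x. \<bar>indicator (cbox a b) x * h x\<bar>)"
      using int by (rule integrable_abs)
    show "AE x in lebesgue. (\<lambda>n. indicator (cbox a b) x * h x * psi a b n x) \<longlonglongrightarrow>
        indicator (cbox a b) x * h x * indicator (box a b) x"
      using psi_lim[OF ab] by (intro AE_I2 tendsto_mult tendsto_const) auto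
    show "AE x in lebesgue. norm (indicator (cbox a b) x * h x * psi a b n x) \<le> \<bar>indicator (cbox a b) x * h x\<bar>" for n
    proof (intro AE_I2)
      fix x
      have "\<bar>psi a b n x\<bar> \<le> 1" using psi_range[of a b n x] by simp
      then show "norm (indicator (cbox a b) x * h x * psi a b n x) \<le> \<bar>indicator (cbox a b) x * h x\<bar>"
        by (simp add: abs_mult mult_left_le)
    qed
  qed
  have "(LINT x|lebesgue. indicator (cbox a b) x * h x * indicator (box a b) x) = (LINT x:box a b|lebesgue. h x)"
    unfolding set_lebesgue_integral_def
    using box_subset_cbox[of a b] by (intro Bochner_Integration.integral_cong) (auto simp: indicator_def)
  moreover have "(\<lambda>n. LINT x|lebesgue. indicator (cbox a b) x * h x * psi a b n x) = (\<lambda>n. 0)"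
    using eq zero psi_test[OF ab sub] by auto
  ultimately show ?thesis using lim by (metis LIMSEQ_const_iff)
qed


lemma sets_borel_box: "sets (borel :: 'a::euclidean_space measure) = sigma_sets UNIV (range (\<lambda>(a, b). box a b :: 'a set))"
  by (subst borel_eq_box) (simp add: sets_measure_of)

lemma borel_sets_lebesgue: "A \<in> sets borel \<Longrightarrow> A \<in> sets lebesgue"
  by (metis sets_completionI_sets sets_lborel)

lemma FL_ae_box:
  fixes h :: "'a::euclidean_space \<Rightarrow> real"
  assumes loc: "\<And>K. compact K \<Longrightarrow> K \<subseteq> \<Omega> \<Longrightarrow> set_integrable lebesgue K h"
    and zero: "\<And>\<psi>. test_function \<Omega> \<psi> \<Longrightarrow> (LINT x:\<Omega>|lebesgue. h x * \<psi> x) = 0"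
    and sub: "cbox a b \<subseteq> \<Omega>"
  shows "AE x in lebesgue. x \<in> box a b \<longrightarrow> h x = 0"
proof -
  define f where "f = (\<lambda>x. indicator (box a b) x * h x)"
  have int: "integrable lebesgue f"
  proof -
    have "set_integrable lebesgue (cbox a b) h" using loc sub by auto
    then have "set_integrable lebesgue (box a b) h"
      by (rule set_integrable_subset) (auto simp: box_subset_cbox)
    then show ?thesis unfolding f_def set_integrable_def by simp
  qed
  have boxes: "(LINT x:box c d|lebesgue. f x) = 0" for c d
  proof -
    define c' :: 'a where "c' = (\<Sum>i\<in>Basis. max (c \<bullet> i) (a \<bullet> i) *\<^sub>R i)"
    define d' :: 'a where "d' = (\<Sum>i\<in>Basis. min (d \<bullet> i) (b \<bullet> i) *\<^sub>R i)"
    have I: "box c d \<inter> box a b = box c' d'" unfolding c'_def d'_def by (rule box_Int_box)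
    have "(LINT x:box c d|lebesgue. f x) = (LINT x:box c' d'|lebesgue. h x)"
      unfolding set_lebesgue_integral_def f_def I[symmetric]
      by (intro Bochner_Integration.integral_cong) (auto simp: indicator_def)
    also have "\<dots> = 0"
    proof (cases "box c' d' = {}")
      case True then show ?thesis by (simp add: set_lebesgue_integral_def)
    next
      case False
      then have "\<forall>i\<in>Basis. c' \<bullet> i < d' \<bullet> i" by (simp add: box_ne_empty)
      then have "cbox c' d' \<subseteq> cbox a b"
        by (auto simp: mem_box c'_def d'_def inner_sum_left inner_Basis if_distrib cong: if_cong)
      with sub show ?thesis by (intro FL_box[OF loc zero]) auto
    qed
    finally show ?thesis .
  qed
  have all_borel: "(LINT x:A|lebesgue. f x) = 0" if A: "A \<in> sets borel" for A
  proof -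
    have A_in: "A \<in> sigma_sets UNIV (range (\<lambda>(a, b). box a b :: 'a set))" using A sets_borel_box by auto
    have st: "Int_stable (range (\<lambda>(a, b). box a b :: 'a set))"
      by (auto simp: Int_stable_def box_Int_box)
    have cl: "range (\<lambda>(a, b). box a b :: 'a set) \<subseteq> Pow UNIV" by auto
    from st cl A_in show ?thesis
    proof (induction rule: sigma_sets_induct_disjoint)
      case (basic A) then show ?case using boxes by auto
    next
      case empty show ?case by (simp add: set_lebesgue_integral_def)
    next
      case (compl A)
      then have "A \<in> sets lebesgue" using sets_borel_box borel_sets_lebesgue by auto
      then have iA: "integrable lebesgue (\<lambda>x. indicator A x * f x)"
        using integrable_mult_indicator[OF _ int] by simp
      have "(LINT x:(UNIV - A)|lebesgue. f x) = (LINT x|lebesgue. f x - indicator A x * f x)"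
        unfolding set_lebesgue_integral_def
        by (intro Bochner_Integration.integral_cong) (auto simp: indicator_def)
      also have "\<dots> = (LINT x|lebesgue. f x) - (LINT x:A|lebesgue. f x)"
        using int iA by (simp add: set_lebesgue_integral_def)
      also have "(LINT x|lebesgue. f x) = (LINT x:box a b|lebesgue. f x)"
        unfolding set_lebesgue_integral_def f_def
        by (intro Bochner_Integration.integral_cong) (auto simp: indicator_def)
      finally show ?case using compl.IH boxes by simp
    next
      case (union F)
      then have meas: "F i \<in> sets lebesgue" for i using sets_borel_box borel_sets_lebesgue by auto
      have "(LINT x:(\<Union>i. F i)|lebesgue. f x) = (\<Sum>i. (LINT x:(F i)|lebesgue. f x))"
      proof (rule lebesgue_integral_countable_add)
        show "F i \<inter> F j = {}" if "i \<noteq> j" for i j using union.hyps(1) that by (auto simp: disjoint_family_on_def)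
        show "set_integrable lebesgue (\<Union>i. F i) f"
          unfolding set_integrable_def using meas
          by (intro integrable_mult_indicator int) auto
      qed (rule meas)
      then show ?case using union.IH by simp
    qed
  qed
  have all_leb: "set_lebesgue_integral lebesgue A f = 0" if A: "A \<in> sets lebesgue" for A
  proof -
    from A obtain S N N' where SN: "A = S \<union> N" "N \<subseteq> N'" "N' \<in> null_sets lborel" "S \<in> sets lborel"
      by (auto elim: sets_completionE)
    have "AE x in lborel. x \<notin> N'" using SN(3) by (rule AE_not_in)
    then have ae: "AE x in lebesgue. x \<notin> N'" by (rule AE_completion)
    have "(LINT x:A|lebesgue. f x) = (LINT x:S|lebesgue. f x)"
    proof (rule set_integral_cong_set)
      show "set_borel_measurable lebesgue A f" "set_borel_measurable lebesgue S f"
        using int A SN(4) borel_sets_lebesgue[of S] integrable_mult_indicator[of S lebesgue f]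
          integrable_mult_indicator[of A lebesgue f]
        by (auto simp: set_borel_measurable_def intro!: borel_measurable_integrable)
      show "AE x in lebesgue. (x \<in> S) = (x \<in> A)"
        using ae by (rule AE_mp) (use SN(1,2) in auto)
    qed
    also have "\<dots> = 0" using all_borel SN(4) by simp
    finally show ?thesis .
  qed
  have "AE x in lebesgue. f x = 0"
    using density_unique_real[OF int integrable_zero] all_leb by (simp add: set_lebesgue_integral_def)
  then show ?thesis by eventually_elim (auto simp: f_def)
qed


lemma FL_ae:
  fixes h :: "'a::euclidean_space \<Rightarrow> real"
  assumes op: "open \<Omega>"
    and loc: "\<And>K. compact K \<Longrightarrow> K \<subseteq> \<Omega> \<Longrightarrow> set_integrable lebesgue K h"
    and zero: "\<And>\<psi>. test_function \<Omega> \<psi> \<Longrightarrow> (LINT x:\<Omega>|lebesgue. h x * \<psi> x) = 0"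
  shows "AE x in lebesgue. x \<in> \<Omega> \<longrightarrow> h x = 0"
proof -
  obtain C :: "nat \<Rightarrow> 'a set" where C: "\<And>n. compact (C n)" "\<And>n. C n \<subseteq> \<Omega>"
    "\<And>n. C n \<subseteq> interior (C (Suc n))" "\<Union>(range C) = \<Omega>"
    "\<And>K. \<lbrakk>compact K; K \<subseteq> \<Omega>\<rbrakk> \<Longrightarrow> \<exists>N. \<forall>n\<ge>N. K \<subseteq> (C n)"
    by (rule open_Union_compact_subsets[OF op]) blast
  have "AE x in lebesgue. x \<in> C n \<longrightarrow> h x = 0" for n
  proof -
    let ?T = "{box a b | a b. cbox a b \<subseteq> \<Omega>}"
    have cov: "C n \<subseteq> \<Union>?T"
    proof
      fix x assume "x \<in> C n"
      then have "x \<in> \<Omega>" using C(2) by blast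
      obtain a b where ab: "cbox a b \<subseteq> \<Omega>" "x \<in> box a b" "\<forall>i\<in>Basis. a \<bullet> i < b \<bullet> i"
        by (rule open_contains_cbox[OF op \<open>x \<in> \<Omega>\<close>])
      have "box a b \<in> ?T" using ab(1) by blast
      then show "x \<in> \<Union>?T" using ab(2) by blast
    qed
    have opn: "\<And>B. B \<in> ?T \<Longrightarrow> open B" by (auto simp: open_box)
    obtain T' where T': "T' \<subseteq> ?T" "finite T'" "C n \<subseteq> \<Union>T'"
      by (rule compactE[OF C(1) cov opn])
    have "AE x in lebesgue. \<forall>B\<in>T'. x \<in> B \<longrightarrow> h x = 0"
    proof (rule AE_finite_allI[OF T'(2)])
      fix B assume "B \<in> T'"
      then obtain a b where ab: "B = box a b" "cbox a b \<subseteq> \<Omega>" using T'(1) by blast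
      show "AE x in lebesgue. x \<in> B \<longrightarrow> h x = 0"
        unfolding ab(1) by (rule FL_ae_box[OF loc zero ab(2)])
    qed
    moreover have "(\<forall>B\<in>T'. x \<in> B \<longrightarrow> h x = 0) \<longrightarrow> x \<in> C n \<longrightarrow> h x = 0" for x
      using T'(3) by blast
    ultimately show ?thesis by (rule AE_mp[OF _ AE_I2])
  qed
  then have "AE x in lebesgue. \<forall>n. x \<in> C n \<longrightarrow> h x = 0"
    by (intro AE_all_countable[THEN iffD2] allI)
  moreover have "(\<forall>n. x \<in> C n \<longrightarrow> h x = 0) \<longrightarrow> x \<in> \<Omega> \<longrightarrow> h x = 0" for x
    using C(4) by blast
  ultimately show ?thesis by (rule AE_mp[OF _ AE_I2])
qed

lemma loc_meas:
  fixes f :: "'a::euclidean_space \<Rightarrow> 'b::euclidean_space"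
  assumes op: "open \<Omega>" and loc: "\<And>K. compact K \<Longrightarrow> K \<subseteq> \<Omega> \<Longrightarrow> set_integrable lebesgue K f"
  shows "(\<lambda>x. indicator \<Omega> x *\<^sub>R f x) \<in> borel_measurable lebesgue"
proof -
  obtain C :: "nat \<Rightarrow> 'a set" where C: "\<And>n. compact (C n)" "\<And>n. C n \<subseteq> \<Omega>"
    "\<And>n. C n \<subseteq> interior (C (Suc n))" "\<Union>(range C) = \<Omega>"
    "\<And>K. \<lbrakk>compact K; K \<subseteq> \<Omega>\<rbrakk> \<Longrightarrow> \<exists>N. \<forall>n\<ge>N. K \<subseteq> (C n)"
    by (rule open_Union_compact_subsets[OF op]) blast
  have suc: "C n \<subseteq> C (Suc n)" for n using C(3)[of n] interior_subset by blast
  have inc: "C n \<subseteq> C m" if "n \<le> m" for n m using lift_Suc_mono_le[of C, OF suc that] .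
  show ?thesis
  proof (rule borel_measurable_LIMSEQ_metric)
    show "(\<lambda>x. indicator (C n) x *\<^sub>R f x) \<in> borel_measurable lebesgue" for n
      using loc[OF C(1) C(2)] unfolding set_integrable_def by (rule borel_measurable_integrable)
    fix x
    show "(\<lambda>n. indicator (C n) x *\<^sub>R f x) \<longlonglongrightarrow> indicator \<Omega> x *\<^sub>R f x"
    proof (cases "x \<in> \<Omega>")
      case True
      then obtain N where "x \<in> C N" using C(4) by blast
      then have "\<forall>\<^sub>F n in sequentially. indicator (C n) x *\<^sub>R f x = indicator \<Omega> x *\<^sub>R f x"
        using inc True unfolding eventually_sequentially by (auto simp: indicator_def)
      then show ?thesis by (rule tendsto_eventually)
    next
      case False
      then have "x \<notin> C n" for n using C(2) by blast
      then show ?thesis using False by simp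
    qed
  qed
qed

lemma grad_inner: "i \<in> Basis \<Longrightarrow> grad f x \<bullet> i = frechet_derivative f (at x) i"
proof -
  assume i: "i \<in> Basis"
  have "grad f x \<bullet> i = (\<Sum>j\<in>Basis. frechet_derivative f (at x) j * (j \<bullet> i))"
    by (simp add: grad_def inner_sum_left)
  also have "\<dots> = (\<Sum>j\<in>Basis. if j = i then frechet_derivative f (at x) i else 0)"
    by (rule sum.cong[OF refl]) (use i in \<open>auto simp: inner_Basis\<close>)
  also have "\<dots> = frechet_derivative f (at x) i" using i by (simp add: sum.delta')
  finally show ?thesis .
qed

lemma test_cont: assumes "test_function \<Omega> \<psi>" shows "continuous_on UNIV \<psi>"
proof -
  have "Ck_fun 0 \<psi>" using assms unfolding test_function_def smooth_fun_def by blast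
  then show ?thesis by simp
qed

lemma test_grad_cont:
  assumes "test_function \<Omega> \<psi>" "i \<in> Basis"
  shows "continuous_on UNIV (\<lambda>x. grad \<psi> x \<bullet> i)"
proof -
  have "Ck_fun (Suc (Suc 0)) \<psi>" using assms(1) unfolding test_function_def smooth_fun_def by blast
  then have "Ck_fun (Suc 0) (\<lambda>x. frechet_derivative \<psi> (at x) i)" using assms(2) by simp
  then have "\<forall>x. (\<lambda>x. frechet_derivative \<psi> (at x) i) differentiable (at x)" by simp
  then have "continuous_on UNIV (\<lambda>x. frechet_derivative \<psi> (at x) i)"
    by (simp add: differentiable_imp_continuous_on differentiable_on_def differentiable_at_withinI)
  moreover have eq: "(\<lambda>x. grad \<psi> x \<bullet> i) = (\<lambda>x. frechet_derivative \<psi> (at x) i)"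
    by (rule ext) (rule grad_inner[OF assms(2)])
  ultimately show ?thesis by (simp only: eq)
qed

lemma test_grad_zero:
  assumes "x \<notin> closure {x. \<psi> x \<noteq> 0}"
  shows "grad \<psi> x = 0"
proof -
  let ?U = "- closure {x. \<psi> x \<noteq> 0}"
  have "((\<lambda>y. 0) has_derivative (\<lambda>h. 0)) (at x)" by simp
  then have "(\<psi> has_derivative (\<lambda>h. 0)) (at x)"
  proof (rule has_derivative_transform_within_open[where s = ?U])
    show "open ?U" by auto
    show "x \<in> ?U" using assms by auto
    fix y assume y: "y \<in> ?U"
    show "0 = \<psi> y"
    proof (rule ccontr)
      assume "0 \<noteq> \<psi> y"
      then have "y \<in> {x. \<psi> x \<noteq> 0}" by simp
      then have "y \<in> closure {x. \<psi> x \<noteq> 0}" by (rule subsetD[OF closure_subset])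
      with y show False by simp
    qed
  qed
  then have "(\<lambda>h. 0) = frechet_derivative \<psi> (at x)" by (rule frechet_derivative_at)
  then have fd: "frechet_derivative \<psi> (at x) = (\<lambda>h. 0)" by (rule sym)
  show ?thesis unfolding grad_def fd by simp
qed

lemma test_supp:
  assumes "test_function \<Omega> \<psi>"
  shows "compact (closure {x. \<psi> x \<noteq> 0})" "closure {x. \<psi> x \<noteq> 0} \<subseteq> \<Omega>"
  using assms unfolding test_function_def by auto

lemma loc_prod_integrable:
  fixes f \<phi> :: "'a::euclidean_space \<Rightarrow> real"
  assumes loc: "\<And>K. compact K \<Longrightarrow> K \<subseteq> \<Omega> \<Longrightarrow> set_integrable lebesgue K f"
    and K: "compact K" "K \<subseteq> \<Omega>" and c: "continuous_on UNIV \<phi>" and z: "\<And>x. x \<notin> K \<Longrightarrow> \<phi> x = 0"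
  shows "set_integrable lebesgue \<Omega> (\<lambda>x. f x * \<phi> x)"
proof -
  have Kl: "K \<in> sets lebesgue" using K(1) borel_compact borel_sets_lebesgue by blast
  have m: "\<phi> \<in> borel_measurable (lebesgue_on K)"
    by (rule continuous_imp_measurable_on_sets_lebesgue[OF continuous_on_subset[OF c] Kl]) simp
  have b: "bounded (\<phi> ` K)"
    using compact_continuous_image[OF continuous_on_subset[OF c] K(1)] compact_imp_bounded by blast
  have "(\<lambda>x. \<phi> x * f x) absolutely_integrable_on K"
    using absolutely_integrable_bounded_measurable_product[OF bilinear_times m Kl b loc[OF K]] .
  moreover have "(\<lambda>x. indicator \<Omega> x *\<^sub>R (f x * \<phi> x)) = (\<lambda>x. indicator K x *\<^sub>R (\<phi> x * f x))"
  proof (rule ext)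
    fix x show "indicator \<Omega> x *\<^sub>R (f x * \<phi> x) = indicator K x *\<^sub>R (\<phi> x * f x)"
      using z[of x] K(2) by (cases "x \<in> K") (auto simp: indicator_def)
  qed
  ultimately show ?thesis unfolding set_integrable_def by simp
qed


lemma wg_loc:
  assumes "weak_grad \<Omega> v g" "compact K" "K \<subseteq> \<Omega>"
  shows "set_integrable lebesgue K v" "set_integrable lebesgue K g"
  using assms unfolding weak_grad_def by auto

lemma wg_eq:
  assumes "weak_grad \<Omega> v g" "test_function \<Omega> \<phi>" "i \<in> Basis"
  shows "(LINT x:\<Omega>|lebesgue. v x * (grad \<phi> x \<bullet> i)) = - (LINT x:\<Omega>|lebesgue. (g x \<bullet> i) * \<phi> x)"
  using assms unfolding weak_grad_def by auto

lemma comp_loc: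
  fixes g :: "'a \<Rightarrow> 'b::euclidean_space"
  assumes "set_integrable M K g"
  shows "set_integrable M K (\<lambda>x. g x \<bullet> i)"
proof -
  have "integrable M (\<lambda>x. (indicator K x *\<^sub>R g x) \<bullet> i)"
    using assms unfolding set_integrable_def by (rule integrable_inner_left)
  then show ?thesis unfolding set_integrable_def by simp
qed

lemma wg_int1:
  assumes "weak_grad \<Omega> v g" "test_function \<Omega> \<phi>" "i \<in> Basis"
  shows "set_integrable lebesgue \<Omega> (\<lambda>x. v x * (grad \<phi> x \<bullet> i))"
proof (rule loc_prod_integrable)
  show "set_integrable lebesgue K v" if "compact K" "K \<subseteq> \<Omega>" for K
    using wg_loc[OF assms(1) that] by blast
  show "compact (closure {x. \<phi> x \<noteq> 0})" "closure {x. \<phi> x \<noteq> 0} \<subseteq> \<Omega>"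
    using test_supp[OF assms(2)] by auto
  show "continuous_on UNIV (\<lambda>x. grad \<phi> x \<bullet> i)" by (rule test_grad_cont[OF assms(2,3)])
  show "grad \<phi> x \<bullet> i = 0" if "x \<notin> closure {x. \<phi> x \<noteq> 0}" for x
    using test_grad_zero[OF that] by simp
qed

lemma wg_int2:
  assumes "weak_grad \<Omega> v g" "test_function \<Omega> \<phi>"
  shows "set_integrable lebesgue \<Omega> (\<lambda>x. (g x \<bullet> i) * \<phi> x)"
proof (rule loc_prod_integrable)
  show "set_integrable lebesgue K (\<lambda>x. g x \<bullet> i)" if "compact K" "K \<subseteq> \<Omega>" for K
    using comp_loc[OF wg_loc(2)[OF assms(1) that]] .
  show "compact (closure {x. \<phi> x \<noteq> 0})" "closure {x. \<phi> x \<noteq> 0} \<subseteq> \<Omega>"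
    using test_supp[OF assms(2)] by auto
  show "continuous_on UNIV \<phi>" by (rule test_cont[OF assms(2)])
  show "\<phi> x = 0" if "x \<notin> closure {x. \<phi> x \<noteq> 0}" for x
  proof (rule ccontr)
    assume "\<phi> x \<noteq> 0"
    then have "x \<in> {x. \<phi> x \<noteq> 0}" by simp
    then have "x \<in> closure {x. \<phi> x \<noteq> 0}" by (rule subsetD[OF closure_subset])
    with that show False by simp
  qed
qed

lemma weak_grad_add:
  assumes v: "weak_grad \<Omega> v gv" and w: "weak_grad \<Omega> w gw"
  shows "weak_grad \<Omega> (\<lambda>x. v x + w x) (\<lambda>x. gv x + gw x)"
  unfolding weak_grad_def
proof (intro conjI allI impI ballI)
  fix K :: "'a set" assume K: "compact K \<and> K \<subseteq> \<Omega>"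
  show "set_integrable lebesgue K (\<lambda>x. v x + w x)"
    using wg_loc(1)[OF v] wg_loc(1)[OF w] K by (intro set_integral_add) auto
  show "set_integrable lebesgue K (\<lambda>x. gv x + gw x)"
    using wg_loc(2)[OF v] wg_loc(2)[OF w] K by (intro set_integral_add) auto
next
  fix \<phi> i assume \<phi>: "test_function \<Omega> \<phi>" and i: "(i::'a) \<in> Basis"
  have "(LINT x:\<Omega>|lebesgue. (v x + w x) * (grad \<phi> x \<bullet> i)) =
        (LINT x:\<Omega>|lebesgue. v x * (grad \<phi> x \<bullet> i) + w x * (grad \<phi> x \<bullet> i))"
    by (simp add: distrib_right)
  also have "\<dots> = (LINT x:\<Omega>|lebesgue. v x * (grad \<phi> x \<bullet> i)) + (LINT x:\<Omega>|lebesgue. w x * (grad \<phi> x \<bullet> i))"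
    by (rule set_integral_add(2)[OF wg_int1[OF v \<phi> i] wg_int1[OF w \<phi> i]])
  also have "\<dots> = - (LINT x:\<Omega>|lebesgue. (gv x \<bullet> i) * \<phi> x) - (LINT x:\<Omega>|lebesgue. (gw x \<bullet> i) * \<phi> x)"
    using wg_eq[OF v \<phi> i] wg_eq[OF w \<phi> i] by simp
  also have "\<dots> = - ((LINT x:\<Omega>|lebesgue. (gv x \<bullet> i) * \<phi> x + (gw x \<bullet> i) * \<phi> x))"
    using set_integral_add(2)[OF wg_int2[OF v \<phi>] wg_int2[OF w \<phi>]] by simp
  also have "\<dots> = - (LINT x:\<Omega>|lebesgue. ((gv x + gw x) \<bullet> i) * \<phi> x)"
    by (simp add: inner_add_left distrib_right)
  finally show "(LINT x:\<Omega>|lebesgue. (v x + w x) * (grad \<phi> x \<bullet> i)) = - (LINT x:\<Omega>|lebesgue. ((gv x + gw x) \<bullet> i) * \<phi> x)" .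
qed

lemma weak_grad_scale:
  assumes v: "weak_grad \<Omega> v gv"
  shows "weak_grad \<Omega> (\<lambda>x. c * v x) (\<lambda>x. c *\<^sub>R gv x)"
  unfolding weak_grad_def
proof (intro conjI allI impI ballI)
  fix K :: "'a set" assume K: "compact K \<and> K \<subseteq> \<Omega>"
  show "set_integrable lebesgue K (\<lambda>x. c * v x)"
    using wg_loc(1)[OF v] K by (intro set_integrable_mult_right) auto
  show "set_integrable lebesgue K (\<lambda>x. c *\<^sub>R gv x)"
    using wg_loc(2)[OF v] K by (intro set_integrable_scaleR_right) auto
next
  fix \<phi> i assume \<phi>: "test_function \<Omega> \<phi>" and i: "(i::'a) \<in> Basis"
  have "(LINT x:\<Omega>|lebesgue. (c * v x) * (grad \<phi> x \<bullet> i)) = c * (LINT x:\<Omega>|lebesgue. v x * (grad \<phi> x \<bullet> i))"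
    by (simp add: mult.assoc)
  also have "\<dots> = - (c * (LINT x:\<Omega>|lebesgue. (gv x \<bullet> i) * \<phi> x))"
    using wg_eq[OF v \<phi> i] by simp
  also have "\<dots> = - (LINT x:\<Omega>|lebesgue. ((c *\<^sub>R gv x) \<bullet> i) * \<phi> x)"
    by (simp add: mult.assoc)
  finally show "(LINT x:\<Omega>|lebesgue. (c * v x) * (grad \<phi> x \<bullet> i)) = - (LINT x:\<Omega>|lebesgue. ((c *\<^sub>R gv x) \<bullet> i) * \<phi> x)" .
qed

lemma weak_grad_zero: "weak_grad \<Omega> (\<lambda>x. 0) (\<lambda>x. 0)"
  unfolding weak_grad_def by (simp add: set_integrable_def set_lebesgue_integral_def)

lemma weak_grad_sum:
  assumes "finite S" "\<And>k. k \<in> S \<Longrightarrow> weak_grad \<Omega> (f k) (g k)"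
  shows "weak_grad \<Omega> (\<lambda>x. \<Sum>k\<in>S. c k * f k x) (\<lambda>x. \<Sum>k\<in>S. c k *\<^sub>R g k x)"
  using assms
proof (induction S rule: finite_induct)
  case empty then show ?case by (simp add: weak_grad_zero)
next
  case (insert a F)
  have "weak_grad \<Omega> (\<lambda>x. c a * f a x + (\<Sum>k\<in>F. c k * f k x)) (\<lambda>x. c a *\<^sub>R g a x + (\<Sum>k\<in>F. c k *\<^sub>R g k x))"
    using insert by (intro weak_grad_add weak_grad_scale) auto
  then show ?case using insert by simp
qed

lemma weak_grad_diff:
  assumes v: "weak_grad \<Omega> v gv" and w: "weak_grad \<Omega> w gw"
  shows "weak_grad \<Omega> (\<lambda>x. v x - w x) (\<lambda>x. gv x - gw x)"
proof -
  have "weak_grad \<Omega> (\<lambda>x. v x + (-1) * w x) (\<lambda>x. gv x + (-1) *\<^sub>R gw x)"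
    by (intro weak_grad_add weak_grad_scale v w)
  then show ?thesis by simp
qed

lemma weak_grad_unique:
  fixes g1 g2 :: "'a::euclidean_space \<Rightarrow> 'a"
  assumes op: "open \<Omega>" and g1: "weak_grad \<Omega> v g1" and g2: "weak_grad \<Omega> v g2"
  shows "AE x in lebesgue. x \<in> \<Omega> \<longrightarrow> g1 x = g2 x"
proof -
  have "AE x in lebesgue. x \<in> \<Omega> \<longrightarrow> g1 x \<bullet> i - g2 x \<bullet> i = 0" if i: "i \<in> Basis" for i
  proof (rule FL_ae[OF op])
    show "set_integrable lebesgue K (\<lambda>x. g1 x \<bullet> i - g2 x \<bullet> i)" if "compact K" "K \<subseteq> \<Omega>" for K
      using comp_loc[OF wg_loc(2)[OF g1 that]] comp_loc[OF wg_loc(2)[OF g2 that]]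
      by (rule set_integral_diff(1))
    fix \<psi> assume \<psi>: "test_function \<Omega> \<psi>"
    have "(LINT x:\<Omega>|lebesgue. (g1 x \<bullet> i - g2 x \<bullet> i) * \<psi> x) =
          (LINT x:\<Omega>|lebesgue. (g1 x \<bullet> i) * \<psi> x - (g2 x \<bullet> i) * \<psi> x)"
      by (simp add: left_diff_distrib)
    also have "\<dots> = (LINT x:\<Omega>|lebesgue. (g1 x \<bullet> i) * \<psi> x) - (LINT x:\<Omega>|lebesgue. (g2 x \<bullet> i) * \<psi> x)"
      by (rule set_integral_diff(2)[OF wg_int2[OF g1 \<psi>] wg_int2[OF g2 \<psi>]])
    also have "\<dots> = 0" using wg_eq[OF g1 \<psi> i] wg_eq[OF g2 \<psi> i] by simp
    finally show "(LINT x:\<Omega>|lebesgue. (g1 x \<bullet> i - g2 x \<bullet> i) * \<psi> x) = 0" .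
  qed
  then have "AE x in lebesgue. \<forall>i\<in>Basis. x \<in> \<Omega> \<longrightarrow> g1 x \<bullet> i - g2 x \<bullet> i = 0"
    by (intro AE_finite_allI) auto
  moreover have "(\<forall>i\<in>Basis. x \<in> \<Omega> \<longrightarrow> g1 x \<bullet> i - g2 x \<bullet> i = 0) \<longrightarrow> x \<in> \<Omega> \<longrightarrow> g1 x = g2 x" for x
    by (auto intro: euclidean_eqI)
  ultimately show ?thesis by (rule AE_mp[OF _ AE_I2])
qed


lemma sli_on:
  fixes f :: "'a::euclidean_space \<Rightarrow> real"
  assumes "\<Omega> \<in> sets lebesgue"
  shows "(LINT x:\<Omega>|lebesgue. f x) = integral\<^sup>L (lebesgue_on \<Omega>) f"
  using assms by (simp add: set_lebesgue_integral_def integral_restrict_space)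

lemma si_on:
  fixes f :: "'a::euclidean_space \<Rightarrow> real"
  assumes "\<Omega> \<in> sets lebesgue"
  shows "set_integrable lebesgue \<Omega> f \<longleftrightarrow> integrable (lebesgue_on \<Omega>) f"
  using assms by (simp add: set_integrable_def integrable_restrict_space)

lemma sbm_on:
  fixes f :: "'a::euclidean_space \<Rightarrow> 'b::euclidean_space"
  assumes "\<Omega> \<in> sets lebesgue"
  shows "(\<lambda>x. indicator \<Omega> x *\<^sub>R f x) \<in> borel_measurable lebesgue \<longleftrightarrow> f \<in> borel_measurable (lebesgue_on \<Omega>)"
  using assms by (simp add: borel_measurable_restrict_space_iff)

lemma sub_integral_on:
  fixes f :: "'a::euclidean_space \<Rightarrow> real"
  assumes "\<Omega> \<in> sets lebesgue" "D \<subseteq> \<Omega>"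
  shows "(LINT x:D|lebesgue. f x) = integral\<^sup>L (lebesgue_on \<Omega>) (\<lambda>x. indicator D x * f x)"
proof -
  have "integral\<^sup>L (lebesgue_on \<Omega>) (\<lambda>x. indicator D x * f x) =
        integral\<^sup>L lebesgue (\<lambda>x. indicator \<Omega> x *\<^sub>R (indicator D x * f x))"
    using assms(1) by (simp add: integral_restrict_space)
  also have "\<dots> = (LINT x:D|lebesgue. f x)"
    unfolding set_lebesgue_integral_def
    by (rule Bochner_Integration.integral_cong) (use assms(2) in \<open>auto simp: indicator_def\<close>)
  finally show ?thesis by simp
qed

lemma int_bounded_sq:
  fixes f :: "'a \<Rightarrow> 'b::euclidean_space"
  assumes "finite_measure M" "f \<in> borel_measurable M" "AE x in M. norm (f x) \<le> B"
  shows "integrable M (\<lambda>x. norm (f x))" "integrable M (\<lambda>x. (norm (f x))\<^sup>2)"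
proof -
  interpret finite_measure M by fact
  show "integrable M (\<lambda>x. norm (f x))"
    by (rule integrable_const_bound[where B = B]) (use assms(2,3) in auto)
  show "integrable M (\<lambda>x. (norm (f x))\<^sup>2)"
  proof (rule integrable_const_bound[where B = "B\<^sup>2"])
    show "AE x in M. norm ((norm (f x))\<^sup>2) \<le> B\<^sup>2"
      using assms(3) by eventually_elim (simp add: power_mono)
  qed (use assms(2) in auto)
qed

lemma int_weighted_inner:
  fixes p q :: "'a \<Rightarrow> 'b::euclidean_space"
  assumes "integrable M (\<lambda>x. (norm (p x))\<^sup>2)" "integrable M (\<lambda>x. (norm (q x))\<^sup>2)"
    and "p \<in> borel_measurable M" "q \<in> borel_measurable M" "E \<in> borel_measurable M"
    and "\<And>x. \<bar>E x\<bar> \<le> B"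
  shows "integrable M (\<lambda>x. E x * (p x \<bullet> q x))"
proof (rule Bochner_Integration.integrable_bound)
  show "integrable M (\<lambda>x. B * ((norm (p x))\<^sup>2 + (norm (q x))\<^sup>2))"
    using assms(1,2) by (intro integrable_mult_right Bochner_Integration.integrable_add)
  show "(\<lambda>x. E x * (p x \<bullet> q x)) \<in> borel_measurable M"
    using assms(3,4,5) by (intro borel_measurable_times borel_measurable_inner) auto
  show "AE x in M. norm (E x * (p x \<bullet> q x)) \<le> norm (B * ((norm (p x))\<^sup>2 + (norm (q x))\<^sup>2))"
  proof (rule AE_I2)
    fix x
    have B: "0 \<le> B" using assms(6)[of x] by linarith
    have "\<bar>p x \<bullet> q x\<bar> \<le> norm (p x) * norm (q x)" by (rule Cauchy_Schwarz_ineq2)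
    also have "\<dots> \<le> (norm (p x))\<^sup>2 + (norm (q x))\<^sup>2"
    proof -
      have s: "0 \<le> (norm (p x) - norm (q x))\<^sup>2" by simp
      have e: "(norm (p x) - norm (q x))\<^sup>2 = (norm (p x))\<^sup>2 + (norm (q x))\<^sup>2 - 2 * (norm (p x) * norm (q x))"
        by (simp add: power2_diff)
      have "0 \<le> norm (p x) * norm (q x)" by simp
      then show ?thesis using s e by linarith
    qed
    finally have pq: "\<bar>p x \<bullet> q x\<bar> \<le> (norm (p x))\<^sup>2 + (norm (q x))\<^sup>2" .
    have "\<bar>E x * (p x \<bullet> q x)\<bar> = \<bar>E x\<bar> * \<bar>p x \<bullet> q x\<bar>" by (simp add: abs_mult)
    also have "\<dots> \<le> B * ((norm (p x))\<^sup>2 + (norm (q x))\<^sup>2)"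
      using assms(6)[of x] pq by (intro mult_mono) auto
    finally show "norm (E x * (p x \<bullet> q x)) \<le> norm (B * ((norm (p x))\<^sup>2 + (norm (q x))\<^sup>2))"
      using B by simp
  qed
qed


theorem lemma2:
  fixes \<Omega> :: "'a::euclidean_space set"
    and \<epsilon> \<eta> \<delta> :: real
    and mu :: "real \<Rightarrow> real"
    and M K :: nat
    and A0 A :: "nat \<Rightarrow> 'a set"
    and u0hat uhat :: "nat \<Rightarrow> real"
    and V :: "real \<Rightarrow> ('a \<Rightarrow> real) set"
    and chi0 chik :: "real \<Rightarrow> nat \<Rightarrow> 'a \<Rightarrow> real"
    and G0 Gk :: "real \<Rightarrow> nat \<Rightarrow> 'a \<Rightarrow> 'a"
    and phi0 :: "'a \<Rightarrow> real" and Gphi0 :: "'a \<Rightarrow> 'a"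
  defines "S \<equiv> (\<Union>m\<in>{1..M}. frontier (A0 m)) - frontier \<Omega>"
  defines "Sd \<equiv> (\<lambda>d. nbhd \<Omega> S d)"
  defines "Ukd \<equiv> (\<lambda>k d. nbhd \<Omega> (frontier (A k)) d)"
  defines "Ud \<equiv> (\<lambda>d. \<Union>k\<in>{1..K}. Ukd k d)"
  defines "Dd \<equiv> (\<lambda>d. \<Omega> - closure (Ud d \<union> Sd d))"
  defines "Akd \<equiv> (\<lambda>k d. (\<Omega> - closure (Ukd k d)) \<inter> A k)"
  defines "Ad \<equiv> (\<lambda>d. \<Union>k\<in>{1..K}. Akd k d)"
  defines "V0 \<equiv> (\<lambda>d. V d \<inter> H1_0 \<Omega>)"
  defines "u\<delta> \<equiv> (\<lambda>x. (\<Sum>m\<in>{1..M}. u0hat m * chi0 \<delta> m x) + (\<Sum>k\<in>{1..K}. uhat k * chik \<delta> k x))"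
  defines "Gu0\<delta> \<equiv> (\<lambda>x. \<Sum>m\<in>{1..M}. u0hat m *\<^sub>R G0 \<delta> m x)"
  defines "Gu\<delta> \<equiv> (\<lambda>x. Gu0\<delta> x + (\<Sum>k\<in>{1..K}. uhat k *\<^sub>R Gk \<delta> k x))"
  \<comment> \<open>domain\<close>
  assumes dom: "lipschitz_domain \<Omega>" "bounded \<Omega>" "connected \<Omega>" "\<Omega> \<noteq> {}"
  \<comment> \<open>weight\<close>
  assumes eps: "\<epsilon> > 0"
    and mu_mono: "\<And>s t. 0 \<le> s \<Longrightarrow> s \<le> t \<Longrightarrow> mu t \<le> mu s"
    and mu0: "mu 0 = 1 / \<epsilon>"
    and mu_pos: "\<And>t. 0 \<le> t \<Longrightarrow> mu t > 0"
    and mu_bd: "\<And>t. 0 \<le> t \<Longrightarrow> t * mu t \<le> 1"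
  \<comment> \<open>background medium\<close>
  assumes A0_open: "\<And>m. m \<in> {1..M} \<Longrightarrow> open (A0 m) \<and> connected (A0 m)"
    and A0_disj: "\<And>m m'. m \<in> {1..M} \<Longrightarrow> m' \<in> {1..M} \<Longrightarrow> m \<noteq> m' \<Longrightarrow> A0 m \<inter> A0 m' = {}"
    and A0_cover: "closure \<Omega> \<subseteq> closure (\<Union>m\<in>{1..M}. A0 m)"
    and A0_bdry: "\<And>m. m \<in> {1..M} \<Longrightarrow>
                    hausdorff_measure (DIM('a) - 1) (frontier (A0 m) \<inter> frontier \<Omega>) > 0"
  \<comment> \<open>inclusions\<close>
  assumes A_open: "\<And>k. k \<in> {1..K} \<Longrightarrow> open (A k) \<and> connected (A k)"
    and A_cc: "\<And>k. k \<in> {1..K} \<Longrightarrow> compact (closure (A k)) \<and> closure (A k) \<subseteq> \<Omega> - S"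
    and uhat_nz: "\<And>k. k \<in> {1..K} \<Longrightarrow> uhat k \<noteq> 0"
    and A_bdry_disj: "\<And>k j. k \<in> {1..K} \<Longrightarrow> j \<in> {1..K} \<Longrightarrow> k \<noteq> j \<Longrightarrow>
                         frontier (A k) \<inter> frontier (A j) = {}"
  \<comment> \<open>standing assumptions on eta\<close>
  assumes eta: "\<eta> > 0"
    and eta_A: "\<And>k. k \<in> {1..K} \<Longrightarrow> Akd k \<eta> \<noteq> {}"
    and eta_SU: "closure (Sd \<eta>) \<inter> closure (Ud \<eta>) = {}"
    and eta_UU: "\<And>k j. k \<in> {1..K} \<Longrightarrow> j \<in> {1..K} \<Longrightarrow> k \<noteq> j \<Longrightarrow>
                    closure (Ukd k \<eta>) \<inter> closure (Ukd j \<eta>) = {}"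
    and eta_comp: "\<And>E. E \<in> components (Dd \<eta> - Ad \<eta>) \<Longrightarrow>
                    hausdorff_measure (DIM('a) - 1) (frontier E \<inter> frontier \<Omega>) > 0"
  \<comment> \<open>approximation spaces and approximate characteristic functions\<close>
  assumes V_sub: "\<And>d. d > 0 \<Longrightarrow> closed_H1_subspace \<Omega> (V d)"
    and chi0_V: "\<And>d m. d > 0 \<Longrightarrow> m \<in> {1..M} \<Longrightarrow> chi0 d m \<in> V d"
    and chik_V: "\<And>d k. d > 0 \<Longrightarrow> k \<in> {1..K} \<Longrightarrow> chik d k \<in> V0 d"
    and chi0_lim: "\<And>m. m \<in> {1..M} \<Longrightarrow>
       ((\<lambda>d. LINT x:\<Omega>|lebesgue. (chi0 d m x - indicator (A0 m) x)\<^sup>2) \<longlongrightarrow> 0) (at_right 0)"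
    and chik_lim: "\<And>k. k \<in> {1..K} \<Longrightarrow>
       ((\<lambda>d. LINT x:\<Omega>|lebesgue. (chik d k x - indicator (A k) x)\<^sup>2) \<longlongrightarrow> 0) (at_right 0)"
  \<comment> \<open>gradients of the approximate characteristic functions, for 0 < d <= eta\<close>
  assumes G0_grad: "\<And>d m. d \<in> {0<..\<eta>} \<Longrightarrow> m \<in> {1..M} \<Longrightarrow> weak_grad \<Omega> (chi0 d m) (G0 d m)"
    and G0_Linf: "\<And>d m. d \<in> {0<..\<eta>} \<Longrightarrow> m \<in> {1..M} \<Longrightarrow>
                    \<exists>C. AE x in lebesgue. x \<in> \<Omega> \<longrightarrow> norm (G0 d m x) \<le> C"
    and G0_supp: "\<And>d m. d \<in> {0<..\<eta>} \<Longrightarrow> m \<in> {1..M} \<Longrightarrow>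
                    AE x in lebesgue. x \<in> \<Omega> - closure (Sd d) \<longrightarrow> G0 d m x = 0"
    and Gk_grad: "\<And>d k. d \<in> {0<..\<eta>} \<Longrightarrow> k \<in> {1..K} \<Longrightarrow> weak_grad \<Omega> (chik d k) (Gk d k)"
    and Gk_Linf: "\<And>d k. d \<in> {0<..\<eta>} \<Longrightarrow> k \<in> {1..K} \<Longrightarrow>
                    \<exists>C. AE x in lebesgue. x \<in> \<Omega> \<longrightarrow> norm (Gk d k x) \<le> C"
    and Gk_supp: "\<And>d k. d \<in> {0<..\<eta>} \<Longrightarrow> k \<in> {1..K} \<Longrightarrow>
                    AE x in lebesgue. x \<in> \<Omega> - closure (Ukd k d) \<longrightarrow> Gk d k x = 0"
  \<comment> \<open>the weighted Dirichlet problem at the given delta\<close>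
  assumes delta: "\<delta> \<in> {0<..\<eta>}"
    and phi0_V: "phi0 \<in> V \<delta>"
    and phi0_grad: "weak_grad \<Omega> phi0 Gphi0"
    and phi0_eq: "\<And>v gv. v \<in> V0 \<delta> \<Longrightarrow> weak_grad \<Omega> v gv \<Longrightarrow>
                    (LINT x:\<Omega>|lebesgue. mu (norm (Gu\<delta> x)) * (Gphi0 x \<bullet> gv x)) = 0"
    and phi0_bc: "(\<lambda>x. phi0 x - u\<delta> x) \<in> V0 \<delta>"
  shows "(LINT x:Dd \<delta>|lebesgue. (norm (Gphi0 x))\<^sup>2) \<le> \<epsilon> * (LINT x:\<Omega>|lebesgue. norm (Gu0\<delta> x))"
proof -
  have op: "open \<Omega>" using dom(1) unfolding lipschitz_domain_def by blast
  have \<Omega>l: "\<Omega> \<in> lmeasurable" using lmeasurable_open dom(2) op by blast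
  have \<Omega>s: "\<Omega> \<in> sets lebesgue" using \<Omega>l fmeasurableD by blast
  have \<Omega>s': "\<Omega> \<inter> space lebesgue \<in> sets lebesgue" using \<Omega>s by simp
  have fin: "finite_measure (lebesgue_on \<Omega>)" using finite_measure_lebesgue_on[OF \<Omega>l] .
  have d0: "0 < \<delta>" "\<delta> \<le> \<eta>" using delta by auto
  have mu_le: "mu t \<le> 1 / \<epsilon>" if "0 \<le> t" for t using mu_mono[of 0 t] mu0 that by simp
  define E where "E x = mu (norm (Gu\<delta> x))" for x
  have Epos: "0 < E x" for x unfolding E_def by (rule mu_pos) simp
  have Eb: "\<bar>E x\<bar> \<le> 1 / \<epsilon>" for x using Epos[of x] mu_le[of "norm (Gu\<delta> x)"] unfolding E_def by simp

  have wG0: "weak_grad \<Omega> (chi0 \<delta> m) (G0 \<delta> m)" if "m \<in> {1..M}" for m using G0_grad delta that by blast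
  have wGk: "weak_grad \<Omega> (chik \<delta> k) (Gk \<delta> k)" if "k \<in> {1..K}" for k using Gk_grad delta that by blast
  have w0: "weak_grad \<Omega> (\<lambda>x. \<Sum>m\<in>{1..M}. u0hat m * chi0 \<delta> m x) Gu0\<delta>"
    unfolding Gu0\<delta>_def by (rule weak_grad_sum) (auto intro: wG0)
  have wk: "weak_grad \<Omega> (\<lambda>x. \<Sum>k\<in>{1..K}. uhat k * chik \<delta> k x) (\<lambda>x. \<Sum>k\<in>{1..K}. uhat k *\<^sub>R Gk \<delta> k x)"
    by (rule weak_grad_sum) (auto intro: wGk)
  have wu: "weak_grad \<Omega> u\<delta> Gu\<delta>"
    unfolding u\<delta>_def Gu\<delta>_def using weak_grad_add[OF w0 wk] by simp
  have wd: "weak_grad \<Omega> (\<lambda>x. phi0 x - u\<delta> x) (\<lambda>x. Gphi0 x - Gu\<delta> x)"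
    by (rule weak_grad_diff[OF phi0_grad wu])
  have Eq1: "(LINT x:\<Omega>|lebesgue. E x * (Gphi0 x \<bullet> (Gphi0 x - Gu\<delta> x))) = 0"
    using phi0_eq[OF phi0_bc wd] unfolding E_def by simp
  have Eq2: "(LINT x:\<Omega>|lebesgue. E x * (Gphi0 x \<bullet> Gk \<delta> k x)) = 0" if "k \<in> {1..K}" for k
    using phi0_eq[OF chik_V[OF d0(1) that] wGk[OF that]] unfolding E_def by simp

  have "phi0 \<in> H1 \<Omega>" using V_sub[OF d0(1)] phi0_V unfolding closed_H1_subspace_def by blast
  then obtain g where g: "weak_grad \<Omega> phi0 g" "L2_vec \<Omega> g" unfolding H1_def by blast
  have ag: "AE x in lebesgue. x \<in> \<Omega> \<longrightarrow> Gphi0 x = g x" by (rule weak_grad_unique[OF op phi0_grad g(1)])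

  have "\<forall>m\<in>{1..M}. \<exists>C. AE x in lebesgue. x \<in> \<Omega> \<longrightarrow> norm (G0 \<delta> m x) \<le> C" using G0_Linf delta by blast
  from bchoice[OF this] obtain C0 where C0: "\<forall>m\<in>{1..M}. AE x in lebesgue. x \<in> \<Omega> \<longrightarrow> norm (G0 \<delta> m x) \<le> C0 m"
    by blast
  have "\<forall>k\<in>{1..K}. \<exists>C. AE x in lebesgue. x \<in> \<Omega> \<longrightarrow> norm (Gk \<delta> k x) \<le> C" using Gk_Linf delta by blast
  from bchoice[OF this] obtain Ck where Ck: "\<forall>k\<in>{1..K}. AE x in lebesgue. x \<in> \<Omega> \<longrightarrow> norm (Gk \<delta> k x) \<le> Ck k"
    by blast

  define GP where "GP x \<longleftrightarrow> Gphi0 x = g x \<and>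
     (\<forall>m\<in>{1..M}. norm (G0 \<delta> m x) \<le> C0 m \<and> (x \<notin> closure (Sd \<delta>) \<longrightarrow> G0 \<delta> m x = 0)) \<and>
     (\<forall>k\<in>{1..K}. norm (Gk \<delta> k x) \<le> Ck k \<and> (x \<notin> closure (Ukd k \<delta>) \<longrightarrow> Gk \<delta> k x = 0))" for x
  have aeGP: "AE x in lebesgue_on \<Omega>. GP x"
  proof -
    have m: "AE x in lebesgue. \<forall>m\<in>{1..M}. x \<in> \<Omega> \<longrightarrow> (norm (G0 \<delta> m x) \<le> C0 m \<and> (x \<notin> closure (Sd \<delta>) \<longrightarrow> G0 \<delta> m x = 0))"
    proof (rule AE_finite_allI)
      fix m assume m: "m \<in> {1..M}"
      show "AE x in lebesgue. x \<in> \<Omega> \<longrightarrow> (norm (G0 \<delta> m x) \<le> C0 m \<and> (x \<notin> closure (Sd \<delta>) \<longrightarrow> G0 \<delta> m x = 0))"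
      proof -
        have a1: "AE x in lebesgue. x \<in> \<Omega> \<longrightarrow> norm (G0 \<delta> m x) \<le> C0 m" using C0 m by blast
        show ?thesis using a1 G0_supp[OF delta m] by eventually_elim auto
      qed
    qed simp
    have k: "AE x in lebesgue. \<forall>k\<in>{1..K}. x \<in> \<Omega> \<longrightarrow> (norm (Gk \<delta> k x) \<le> Ck k \<and> (x \<notin> closure (Ukd k \<delta>) \<longrightarrow> Gk \<delta> k x = 0))"
    proof (rule AE_finite_allI)
      fix k assume k: "k \<in> {1..K}"
      show "AE x in lebesgue. x \<in> \<Omega> \<longrightarrow> (norm (Gk \<delta> k x) \<le> Ck k \<and> (x \<notin> closure (Ukd k \<delta>) \<longrightarrow> Gk \<delta> k x = 0))"
      proof -
        have a1: "AE x in lebesgue. x \<in> \<Omega> \<longrightarrow> norm (Gk \<delta> k x) \<le> Ck k" using Ck k by blast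
        show ?thesis using a1 Gk_supp[OF delta k] by eventually_elim auto
      qed
    qed simp
    have "AE x in lebesgue. x \<in> \<Omega> \<longrightarrow> GP x"
      using ag m k by eventually_elim (auto simp: GP_def)
    then show ?thesis by (simp add: AE_restrict_space_iff[OF \<Omega>s'])
  qed

  let ?N = "lebesgue_on \<Omega>"
  have mloc: "G \<in> borel_measurable ?N" if "weak_grad \<Omega> v G" for v and G :: "'a \<Rightarrow> 'a"
    using loc_meas[OF op, of G] wg_loc(2)[OF that] sbm_on[OF \<Omega>s] by blast
  have ma: "Gphi0 \<in> borel_measurable ?N" by (rule mloc[OF phi0_grad])
  have mG0: "G0 \<delta> m \<in> borel_measurable ?N" if "m \<in> {1..M}" for m by (rule mloc[OF wG0[OF that]])
  have mGk: "Gk \<delta> k \<in> borel_measurable ?N" if "k \<in> {1..K}" for k by (rule mloc[OF wGk[OF that]])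
  have mb: "Gu0\<delta> \<in> borel_measurable ?N"
    unfolding Gu0\<delta>_def using mG0 by (intro borel_measurable_sum borel_measurable_scaleR) auto
  have mc: "Gu\<delta> \<in> borel_measurable ?N"
    unfolding Gu\<delta>_def using mb mGk by (intro borel_measurable_add borel_measurable_sum borel_measurable_scaleR) auto
  have mE: "E \<in> borel_measurable ?N"
  proof -
    have mono: "mono (\<lambda>t. - mu (max 0 t))"
      unfolding mono_def by (auto intro!: mu_mono)
    have "(\<lambda>x. - mu (max 0 (norm (Gu\<delta> x)))) \<in> borel_measurable ?N"
      using measurable_compose[OF measurable_compose[OF mc borel_measurable_norm] borel_measurable_mono[OF mono]] by simp
    then have "(\<lambda>x. - (- mu (max 0 (norm (Gu\<delta> x))))) \<in> borel_measurable ?N"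
      by (rule borel_measurable_uminus)
    then show ?thesis unfolding E_def by simp
  qed
  have mg: "g \<in> borel_measurable ?N"
    using g(2) sbm_on[OF \<Omega>s] unfolding L2_vec_def set_borel_measurable_def by blast

  have supp_disj: "x \<notin> closure (Ukd k \<delta>)" if x: "x \<in> closure (Sd \<delta>)" and k: "k \<in> {1..K}" for x k
  proof -
    have "Sd \<delta> \<subseteq> Sd \<eta>" unfolding Sd_def nbhd_def using d0(2) less_le_trans by blast
    then have 1: "closure (Sd \<delta>) \<subseteq> closure (Sd \<eta>)" by (rule closure_mono)
    have "Ukd k \<delta> \<subseteq> Ukd k \<eta>" unfolding Ukd_def nbhd_def using d0(2) less_le_trans by blast
    also have "\<dots> \<subseteq> Ud \<eta>" unfolding Ud_def using k by blast
    finally have "Ukd k \<delta> \<subseteq> Ud \<eta>" .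
    then have 2: "closure (Ukd k \<delta>) \<subseteq> closure (Ud \<eta>)" by (rule closure_mono)
    show ?thesis using 1 2 eta_SU x by blast
  qed
  have GP_b0: "Gu0\<delta> x = 0" if "GP x" "x \<notin> closure (Sd \<delta>)" for x
  proof -
    have "\<forall>m\<in>{1..M}. G0 \<delta> m x = 0" using that unfolding GP_def by blast
    then show ?thesis unfolding Gu0\<delta>_def by (intro sum.neutral) auto
  qed
  have GP_c0: "Gu\<delta> x = 0" if gp: "GP x" and xD: "x \<in> Dd \<delta>" for x
  proof -
    have nc: "x \<notin> closure (Ud \<delta> \<union> Sd \<delta>)" using xD unfolding Dd_def by blast
    have "closure (Sd \<delta>) \<subseteq> closure (Ud \<delta> \<union> Sd \<delta>)" by (rule closure_mono) blast
    then have b0: "Gu0\<delta> x = 0" using GP_b0[OF gp] nc by blast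
    have "Gk \<delta> k x = 0" if k: "k \<in> {1..K}" for k
    proof -
      have "Ukd k \<delta> \<subseteq> Ud \<delta> \<union> Sd \<delta>" unfolding Ud_def using k by blast
      then have "closure (Ukd k \<delta>) \<subseteq> closure (Ud \<delta> \<union> Sd \<delta>)" by (rule closure_mono)
      then show ?thesis using gp k nc unfolding GP_def by blast
    qed
    then show ?thesis unfolding Gu\<delta>_def using b0 by simp
  qed
  have GP_cb: "Gu\<delta> x = Gu0\<delta> x" if gp: "GP x" and x: "x \<in> closure (Sd \<delta>)" for x
  proof -
    have "Gk \<delta> k x = 0" if k: "k \<in> {1..K}" for k
      using gp k supp_disj[OF x k] unfolding GP_def by blast
    then show ?thesis unfolding Gu\<delta>_def by simp
  qed
  define Bb where "Bb = (\<Sum>m\<in>{1..M}. \<bar>u0hat m\<bar> * C0 m)"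
  have Bbound: "norm (Gu0\<delta> x) \<le> Bb" if gp: "GP x" for x
  proof -
    have "norm (Gu0\<delta> x) \<le> (\<Sum>m\<in>{1..M}. norm (u0hat m *\<^sub>R G0 \<delta> m x))"
      unfolding Gu0\<delta>_def by (rule norm_sum)
    also have "\<dots> \<le> Bb" unfolding Bb_def
    proof (rule sum_mono)
      fix m assume "m \<in> {1..M}"
      then have "norm (G0 \<delta> m x) \<le> C0 m" using gp unfolding GP_def by blast
      then show "norm (u0hat m *\<^sub>R G0 \<delta> m x) \<le> \<bar>u0hat m\<bar> * C0 m"
        by (simp add: mult_left_mono)
    qed
    finally show ?thesis .
  qed
  have Ebb: "E x * (Gu0\<delta> x \<bullet> Gu0\<delta> x) \<le> norm (Gu0\<delta> x)" if gp: "GP x" for x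
  proof (cases "x \<in> closure (Sd \<delta>)")
    case True
    define t where "t = norm (Gu0\<delta> x)"
    have t0: "0 \<le> t" unfolding t_def by simp
    have Et: "E x = mu t" unfolding E_def t_def using GP_cb[OF gp True] by simp
    have "E x * (Gu0\<delta> x \<bullet> Gu0\<delta> x) = t * (t * mu t)"
      unfolding Et t_def by (simp add: power2_norm_eq_inner[symmetric] power2_eq_square)
    also have "\<dots> \<le> t * 1" using mu_bd[OF t0] t0 by (intro mult_left_mono) auto
    finally show ?thesis unfolding t_def by simp
  next
    case False
    then show ?thesis using GP_b0[OF gp] by simp
  qed

  have int_g2: "integrable ?N (\<lambda>x. (norm (g x))\<^sup>2)"
    using g(2) si_on[OF \<Omega>s] unfolding L2_vec_def by blast
  have ma2: "(\<lambda>x. (norm (Gphi0 x))\<^sup>2) \<in> borel_measurable ?N"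
    by (rule borel_measurable_power[OF measurable_compose[OF ma borel_measurable_norm]])
  have mg2: "(\<lambda>x. (norm (g x))\<^sup>2) \<in> borel_measurable ?N"
    by (rule borel_measurable_power[OF measurable_compose[OF mg borel_measurable_norm]])
  have "AE x in ?N. (norm (Gphi0 x))\<^sup>2 = (norm (g x))\<^sup>2"
    using aeGP by eventually_elim (simp add: GP_def)
  then have int_a2: "integrable ?N (\<lambda>x. (norm (Gphi0 x))\<^sup>2)"
    using integrable_cong_AE[OF ma2 mg2] int_g2 by blast
  have aeB: "AE x in ?N. norm (Gu0\<delta> x) \<le> Bb"
    using aeGP by eventually_elim (rule Bbound)
  have int_b: "integrable ?N (\<lambda>x. norm (Gu0\<delta> x))" and int_b2: "integrable ?N (\<lambda>x. (norm (Gu0\<delta> x))\<^sup>2)"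
    using int_bounded_sq[OF fin mb aeB] by auto
  have int_G2: "integrable ?N (\<lambda>x. (norm (Gk \<delta> k x))\<^sup>2)" if k: "k \<in> {1..K}" for k
  proof -
    have "AE x in ?N. norm (Gk \<delta> k x) \<le> Ck k"
      using aeGP by eventually_elim (use k in \<open>simp add: GP_def\<close>)
    then show ?thesis using int_bounded_sq(2)[OF fin mGk[OF k]] by blast
  qed
  have int_Eaa: "integrable ?N (\<lambda>x. E x * (Gphi0 x \<bullet> Gphi0 x))"
    by (rule int_weighted_inner[OF int_a2 int_a2 ma ma mE Eb])
  have int_Eab: "integrable ?N (\<lambda>x. E x * (Gphi0 x \<bullet> Gu0\<delta> x))"
    by (rule int_weighted_inner[OF int_a2 int_b2 ma mb mE Eb])
  have int_Ebb: "integrable ?N (\<lambda>x. E x * (Gu0\<delta> x \<bullet> Gu0\<delta> x))"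
    by (rule int_weighted_inner[OF int_b2 int_b2 mb mb mE Eb])
  have int_EaG: "integrable ?N (\<lambda>x. E x * (Gphi0 x \<bullet> Gk \<delta> k x))" if k: "k \<in> {1..K}" for k
    by (rule int_weighted_inner[OF int_a2 int_G2[OF k] ma mGk[OF k] mE Eb])
  let ?Iaa = "integral\<^sup>L ?N (\<lambda>x. E x * (Gphi0 x \<bullet> Gphi0 x))"
  let ?Iab = "integral\<^sup>L ?N (\<lambda>x. E x * (Gphi0 x \<bullet> Gu0\<delta> x))"
  let ?Ibb = "integral\<^sup>L ?N (\<lambda>x. E x * (Gu0\<delta> x \<bullet> Gu0\<delta> x))"
  have EqN1: "integral\<^sup>L ?N (\<lambda>x. E x * (Gphi0 x \<bullet> (Gphi0 x - Gu\<delta> x))) = 0"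
    using Eq1 sli_on[OF \<Omega>s] by simp
  have EqN2: "integral\<^sup>L ?N (\<lambda>x. E x * (Gphi0 x \<bullet> Gk \<delta> k x)) = 0" if k: "k \<in> {1..K}" for k
    using Eq2[OF k] sli_on[OF \<Omega>s] by simp
  have split: "E x * (Gphi0 x \<bullet> (Gphi0 x - Gu\<delta> x)) =
      (E x * (Gphi0 x \<bullet> Gphi0 x) - E x * (Gphi0 x \<bullet> Gu0\<delta> x)) -
      (\<Sum>k\<in>{1..K}. uhat k * (E x * (Gphi0 x \<bullet> Gk \<delta> k x)))" for x
    unfolding Gu\<delta>_def by (simp add: inner_diff_right inner_add_right inner_sum_right sum_distrib_left algebra_simps)
  have int_sumk: "integrable ?N (\<lambda>x. \<Sum>k\<in>{1..K}. uhat k * (E x * (Gphi0 x \<bullet> Gk \<delta> k x)))"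
  proof (rule Bochner_Integration.integrable_sum)
    fix k assume k: "k \<in> {1..K}"
    show "integrable ?N (\<lambda>x. uhat k * (E x * (Gphi0 x \<bullet> Gk \<delta> k x)))"
      using int_EaG[OF k] by simp
  qed
  have int_d: "integrable ?N (\<lambda>x. E x * (Gphi0 x \<bullet> Gphi0 x) - E x * (Gphi0 x \<bullet> Gu0\<delta> x))"
    using int_Eaa int_Eab by (rule Bochner_Integration.integrable_diff)
  have "integral\<^sup>L ?N (\<lambda>x. E x * (Gphi0 x \<bullet> (Gphi0 x - Gu\<delta> x))) =
      integral\<^sup>L ?N (\<lambda>x. E x * (Gphi0 x \<bullet> Gphi0 x) - E x * (Gphi0 x \<bullet> Gu0\<delta> x)) -
      integral\<^sup>L ?N (\<lambda>x. \<Sum>k\<in>{1..K}. uhat k * (E x * (Gphi0 x \<bullet> Gk \<delta> k x)))"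
    unfolding split by (rule Bochner_Integration.integral_diff[OF int_d int_sumk])
  also have "integral\<^sup>L ?N (\<lambda>x. \<Sum>k\<in>{1..K}. uhat k * (E x * (Gphi0 x \<bullet> Gk \<delta> k x))) = 0"
  proof -
    have "integral\<^sup>L ?N (\<lambda>x. \<Sum>k\<in>{1..K}. uhat k * (E x * (Gphi0 x \<bullet> Gk \<delta> k x))) =
        (\<Sum>k\<in>{1..K}. integral\<^sup>L ?N (\<lambda>x. uhat k * (E x * (Gphi0 x \<bullet> Gk \<delta> k x))))"
    proof (rule Bochner_Integration.integral_sum)
      fix k assume k: "k \<in> {1..K}"
      show "integrable ?N (\<lambda>x. uhat k * (E x * (Gphi0 x \<bullet> Gk \<delta> k x)))"
        using int_EaG[OF k] by simp
    qed
    also have "\<dots> = 0" using EqN2 by (intro sum.neutral) simp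
    finally show ?thesis .
  qed
  also have "integral\<^sup>L ?N (\<lambda>x. E x * (Gphi0 x \<bullet> Gphi0 x) - E x * (Gphi0 x \<bullet> Gu0\<delta> x)) = ?Iaa - ?Iab"
    by (rule Bochner_Integration.integral_diff[OF int_Eaa int_Eab])
  finally have Iaa_ab: "?Iaa = ?Iab" using EqN1 by simp

  have ineq_pt: "E x * (Gphi0 x \<bullet> Gu0\<delta> x) \<le> (E x * (Gphi0 x \<bullet> Gphi0 x) + E x * (Gu0\<delta> x \<bullet> Gu0\<delta> x)) / 2" for x
  proof -
    have "0 \<le> (Gphi0 x - Gu0\<delta> x) \<bullet> (Gphi0 x - Gu0\<delta> x)" by simp
    then have "2 * (Gphi0 x \<bullet> Gu0\<delta> x) \<le> Gphi0 x \<bullet> Gphi0 x + Gu0\<delta> x \<bullet> Gu0\<delta> x"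
      by (simp add: inner_diff_left inner_diff_right inner_commute)
    then have "E x * (2 * (Gphi0 x \<bullet> Gu0\<delta> x)) \<le> E x * (Gphi0 x \<bullet> Gphi0 x + Gu0\<delta> x \<bullet> Gu0\<delta> x)"
      using Epos[of x] by (intro mult_left_mono) auto
    then show ?thesis by (simp add: algebra_simps)
  qed
  have "?Iab \<le> integral\<^sup>L ?N (\<lambda>x. (E x * (Gphi0 x \<bullet> Gphi0 x) + E x * (Gu0\<delta> x \<bullet> Gu0\<delta> x)) / 2)"
    using int_Eab int_Eaa int_Ebb ineq_pt by (intro integral_mono) auto
  also have "\<dots> = (?Iaa + ?Ibb) / 2"
    using int_Eaa int_Ebb by simp
  finally have Iaa_bb: "?Iaa \<le> ?Ibb" using Iaa_ab by simp
  have Ibb_b: "?Ibb \<le> integral\<^sup>L ?N (\<lambda>x. norm (Gu0\<delta> x))"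
  proof (rule integral_mono_AE[OF int_Ebb int_b])
    show "AE x in ?N. E x * (Gu0\<delta> x \<bullet> Gu0\<delta> x) \<le> norm (Gu0\<delta> x)"
      using aeGP by eventually_elim (rule Ebb)
  qed

  have Dd\<Omega>: "Dd \<delta> \<subseteq> \<Omega>" unfolding Dd_def by blast
  have "Dd \<delta> \<in> sets borel" unfolding Dd_def by (intro sets.Diff borel_open[OF op] borel_closed) (rule closed_closure)
  then have Dds: "Dd \<delta> \<in> sets lebesgue" by (rule borel_sets_lebesgue)
  have DdN: "Dd \<delta> \<in> sets ?N" using sets_restrict_space_iff[OF \<Omega>s'] Dd\<Omega> Dds by blast
  have mI: "indicat_real (Dd \<delta>) \<in> borel_measurable ?N" using DdN by (rule borel_measurable_indicator)
  have mEaa: "(\<lambda>x. E x * (Gphi0 x \<bullet> Gphi0 x)) \<in> borel_measurable ?N"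
    using int_Eaa by (rule borel_measurable_integrable)
  have int_ind: "integrable ?N (\<lambda>x. indicator (Dd \<delta>) x * (E x * (Gphi0 x \<bullet> Gphi0 x)))"
    using integrable_mult_indicator[OF DdN int_Eaa] by simp
  have "(LINT x:Dd \<delta>|lebesgue. (norm (Gphi0 x))\<^sup>2) = integral\<^sup>L ?N (\<lambda>x. indicator (Dd \<delta>) x * (norm (Gphi0 x))\<^sup>2)"
    by (rule sub_integral_on[OF \<Omega>s Dd\<Omega>])
  also have "\<dots> = integral\<^sup>L ?N (\<lambda>x. \<epsilon> * (indicator (Dd \<delta>) x * (E x * (Gphi0 x \<bullet> Gphi0 x))))"
  proof (rule integral_cong_AE)
    show "(\<lambda>x. indicator (Dd \<delta>) x * (norm (Gphi0 x))\<^sup>2) \<in> borel_measurable ?N"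
      using mI ma2 by (rule borel_measurable_times)
    show "(\<lambda>x. \<epsilon> * (indicator (Dd \<delta>) x * (E x * (Gphi0 x \<bullet> Gphi0 x)))) \<in> borel_measurable ?N"
      by (rule borel_measurable_times[OF borel_measurable_const borel_measurable_times[OF mI mEaa]])
    show "AE x in ?N. indicator (Dd \<delta>) x * (norm (Gphi0 x))\<^sup>2 = \<epsilon> * (indicator (Dd \<delta>) x * (E x * (Gphi0 x \<bullet> Gphi0 x)))"
      using aeGP
    proof eventually_elim
      case (elim x)
      show ?case
      proof (cases "x \<in> Dd \<delta>")
        case True
        have "E x = 1 / \<epsilon>" unfolding E_def using GP_c0[OF elim True] mu0 by simp
        then show ?thesis using True eps by (simp add: power2_norm_eq_inner)
      qed simp
    qed
  qed
  also have "\<dots> = \<epsilon> * integral\<^sup>L ?N (\<lambda>x. indicator (Dd \<delta>) x * (E x * (Gphi0 x \<bullet> Gphi0 x)))"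
    by simp
  also have "\<dots> \<le> \<epsilon> * ?Iaa"
  proof (rule mult_left_mono)
    show "integral\<^sup>L ?N (\<lambda>x. indicator (Dd \<delta>) x * (E x * (Gphi0 x \<bullet> Gphi0 x))) \<le> ?Iaa"
    proof (rule integral_mono[OF int_ind int_Eaa])
      fix x
      have "0 \<le> E x * (Gphi0 x \<bullet> Gphi0 x)" using Epos[of x] by simp
      then show "indicator (Dd \<delta>) x * (E x * (Gphi0 x \<bullet> Gphi0 x)) \<le> E x * (Gphi0 x \<bullet> Gphi0 x)"
        by (simp add: indicator_def)
    qed
  qed (use eps in simp)
  also have "\<dots> \<le> \<epsilon> * integral\<^sup>L ?N (\<lambda>x. norm (Gu0\<delta> x))"
    using Iaa_bb Ibb_b eps by (intro mult_left_mono) auto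
  also have "\<dots> = \<epsilon> * (LINT x:\<Omega>|lebesgue. norm (Gu0\<delta> x))"
    using sli_on[OF \<Omega>s] by simp
  finally show ?thesis .
qed


end
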